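(* Let $F$ be a measure on $\mathbb{Z}_+$ with $F(0)<\infty$ and $\sum_{k\ge1}F(k)/k<\infty$, and let $S$ be the associated measure ($S(\{\xi^0\})=F(0)$, $S(\{\xi^k\})=F(k)/k$ for $k\ge1$). The $S$-coalescent comes down from infinity if and only if $$S(\{\xi^0\})>0\quad\text{or}\quad\sum_{k\ge1}kS(\{\xi^k\})=\sum_{k\ge1}F(k)=\infty.$$
   Context: $\xi^0=(0,0,\dots)$, $\xi^k=(1/k,\dots,1/k,0,\dots)$ ($k$ entries $1/k$). The $S$-coalescent associated with $F$ is the exchangeable $\Xi$-coalescent with $\Xi=S$; concretely, when started from a partition with $b$ blocks, at rate $F(0)$ each pair of blocks merges (Kingman part), and at rate $F(k)$ ($k\ge1$) all current blocks are thrown independently and uniformly into $k$ boxes and all blocks in the same box merge. Let $N_t$ be its number of blocks at time $t$, started with $N_0=\infty$ (partition of $\mathbb{N}$ into singletons). The coalescent comes down from infinity if $N_t<\infty$ almost surely for every $t>0$. *)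

theory Defs
  imports Complex_Main "HOL-Library.FuncSet"
begin

text \<open>A measure F on Z_+ is given by its point masses F k (nonnegative reals).
 The associated measure S on the simplex has atoms S({xi^0}) = F 0 and
 S({xi^k}) = F k / k for k >= 1.\<close>

definition S_atom :: "(nat \<Rightarrow> real) \<Rightarrow> nat \<Rightarrow> real" where
  "S_atom F k = (if k = 0 then F 0 else F k / real k)"

definition occ :: "nat \<Rightarrow> nat \<Rightarrow> nat \<Rightarrow> real" where
  "occ b k j = real (card {f \<in> {..<b} \<rightarrow>\<^sub>E {..<k}. card (f ` {..<b}) = j}) / real k ^ b"

text \<open>Jump rate of the block-counting process from b blocks to j < b blocks:
 Kingman part (rate F 0 per pair) plus the k-box events at rate F k.\<close>
definition rate :: "(nat \<Rightarrow> real) \<Rightarrow> nat \<Rightarrow> nat \<Rightarrow> real" where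
  "rate F b j = (if j + 1 = b then F 0 * real (b choose 2) else 0)
               + (\<Sum>k. F (Suc k) * occ b (Suc k) j)"

definition genQ :: "(nat \<Rightarrow> real) \<Rightarrow> nat \<Rightarrow> nat \<Rightarrow> real" where
  "genQ F i j = (if j < i then rate F i j
                 else if j = i then - (\<Sum>l\<in>{1..<i}. rate F i l) else 0)"

text \<open>Powers of the generator restricted to the finite state space {1..n}
 (closed, since the number of blocks only decreases).\<close>
fun mpow :: "(nat \<Rightarrow> real) \<Rightarrow> nat \<Rightarrow> nat \<Rightarrow> nat \<Rightarrow> nat \<Rightarrow> real" where
  "mpow F n 0 i j = (if i = j then 1 else 0)"
| "mpow F n (Suc m) i j = (\<Sum>l\<in>{1..n}. mpow F n m i l * genQ F l j)"

text \<open>Transition probabilities P(N^{(n)}_t = j | N^{(n)}_0 = i) = exp(tQ)_{ij}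
 for the number of blocks of the coalescent restricted to {1..n}.\<close>
definition trans :: "(nat \<Rightarrow> real) \<Rightarrow> nat \<Rightarrow> real \<Rightarrow> nat \<Rightarrow> nat \<Rightarrow> real" where
  "trans F n t i j = (\<Sum>m. t ^ m / fact m * mpow F n m i j)"

text \<open>N_t = lim_n N^{(n)}_t (nondecreasing in n under the natural coupling), hence
 P(N_t \<le> M) = lim_n P(N^{(n)}_t \<le> M) and P(N_t < \<infinity>) = lim_M P(N_t \<le> M).
 The coalescent comes down from infinity iff this is 1 for every t > 0.\<close>
definition comes_down_from_infinity :: "(nat \<Rightarrow> real) \<Rightarrow> bool" where
  "comes_down_from_infinity F \<longleftrightarrow>
     (\<forall>t>0. ((\<lambda>M. lim (\<lambda>n. \<Sum>j\<in>{1..M}. trans F n t n j)) \<longlongrightarrow> 1) at_top)"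

end

theory Submission
  imports Defs
begin


lemma occ_nonneg: "occ b k j \<ge> 0"
  unfolding occ_def by simp

lemma finite_P: "finite ({..<b::nat} \<rightarrow>\<^sub>E {..<k::nat})"
  by (simp add: finite_PiE)

lemma card_P: "card ({..<b::nat} \<rightarrow>\<^sub>E {..<k::nat}) = k ^ b"
  by (simp add: card_PiE)

lemma occ_sum:
  assumes "finite J"
  shows "(\<Sum>j\<in>J. occ b k j) =
    real (card {f \<in> {..<b} \<rightarrow>\<^sub>E {..<k}. card (f ` {..<b}) \<in> J}) / real k ^ b"
proof -
  let ?P = "{..<b} \<rightarrow>\<^sub>E {..<k}"
  let ?g = "\<lambda>f. card (f ` {..<b})"
  let ?S = "{f \<in> ?P. ?g f \<in> J}"
  have fS: "finite ?S" using finite_P by auto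
  have "(\<Sum>j\<in>J. card {f \<in> ?P. ?g f = j}) = (\<Sum>j\<in>J. card {f \<in> ?S. ?g f = j})"
    by (rule sum.cong) (auto intro!: arg_cong[where f=card])
  also have "\<dots> = (\<Sum>j\<in>J. \<Sum>f\<in>{f \<in> ?S. ?g f = j}. 1)"
    by simp
  also have "\<dots> = (\<Sum>f\<in>?S. 1)"
    by (rule sum.group[OF fS assms]) auto
  also have "\<dots> = card ?S" by simp
  finally have cnt: "(\<Sum>j\<in>J. card {f \<in> ?P. ?g f = j}) = card ?S" .
  have e: "(\<Sum>j\<in>J. real (card {f \<in> ?P. ?g f = j})) = real (card ?S)"
    using arg_cong[OF cnt, of real] by (simp only: of_nat_sum)
  have "(\<Sum>j\<in>J. occ b k j) = (\<Sum>j\<in>J. real (card {f \<in> ?P. ?g f = j}) / real k ^ b)"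
    unfolding occ_def by (rule refl)
  also have "\<dots> = (\<Sum>j\<in>J. real (card {f \<in> ?P. ?g f = j})) / real k ^ b"
    by (rule sum_divide_distrib[symmetric])
  finally show ?thesis using e by simp
qed

lemma occ_le1:
  assumes "finite J" "k \<ge> 1"
  shows "(\<Sum>j\<in>J. occ b k j) \<le> 1"
proof -
  have False: "k \<noteq> 0" using assms by simp
  have "card {f \<in> {..<b} \<rightarrow>\<^sub>E {..<k}. card (f ` {..<b}) \<in> J} \<le> card ({..<b} \<rightarrow>\<^sub>E {..<k})"
    by (rule card_mono[OF finite_P]) blast
  then have "card {f \<in> {..<b} \<rightarrow>\<^sub>E {..<k}. card (f ` {..<b}) \<in> J} \<le> k ^ b"
    by (simp only: card_P)
  then have "real (card {f \<in> {..<b} \<rightarrow>\<^sub>E {..<k}. card (f ` {..<b}) \<in> J}) \<le> real (k ^ b)"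
    by (simp only: of_nat_le_iff)
  then have "real (card {f \<in> {..<b} \<rightarrow>\<^sub>E {..<k}. card (f ` {..<b}) \<in> J}) \<le> real k ^ b"
    by (simp only: of_nat_power)
  then show ?thesis using occ_sum[OF assms(1), of b k] False by simp
qed

lemma occ_eq1:
  assumes "finite J" "k \<ge> 1" "b \<ge> 1" "{1..k} \<subseteq> J"
  shows "(\<Sum>j\<in>J. occ b k j) = 1"
proof -
  have "{f \<in> {..<b} \<rightarrow>\<^sub>E {..<k}. card (f ` {..<b}) \<in> J} = {..<b} \<rightarrow>\<^sub>E {..<k}"
  proof (intro equalityI subsetI)
    fix f assume f: "f \<in> {..<b} \<rightarrow>\<^sub>E {..<k}"
    have "f ` {..<b} \<subseteq> {..<k}" by (rule image_subsetI) (rule PiE_mem[OF f])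
    then have c1: "card (f ` {..<b}) \<le> k" by (metis card_lessThan card_mono finite_lessThan)
    have c2: "card (f ` {..<b}) \<ge> 1"
      using assms(3) by (simp add: Suc_le_eq card_gt_0_iff lessThan_empty_iff)
    have "card (f ` {..<b}) \<in> {1..k}" using c1 c2 by simp
    then show "f \<in> {f \<in> {..<b} \<rightarrow>\<^sub>E {..<k}. card (f ` {..<b}) \<in> J}"
      using f assms(4) by blast
  qed simp
  then show ?thesis using occ_sum[OF assms(1), of b k] card_P[of b k] assms(2) by simp
qed

lemma occ_mono:
  assumes "k \<ge> 1" "b \<ge> 1"
  shows "(\<Sum>j\<in>{1..M}. occ (Suc b) k j) \<le> (\<Sum>j\<in>{1..M}. occ b k j)"
proof -
  let ?A' = "{f \<in> {..<Suc b} \<rightarrow>\<^sub>E {..<k}. card (f ` {..<Suc b}) \<in> {1..M}}"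
  let ?A = "{f \<in> {..<b} \<rightarrow>\<^sub>E {..<k}. card (f ` {..<b}) \<in> {1..M}}"
  let ?phi = "\<lambda>f. (restrict f {..<b}, f b)"
  have inj: "inj_on ?phi ?A'"
  proof (rule inj_onI)
    fix f g assume f: "f \<in> ?A'" and g: "g \<in> ?A'" and eq: "?phi f = ?phi g"
    show "f = g"
    proof
      fix x
      show "f x = g x"
      proof (cases "x < b")
        case True
        then show ?thesis using eq by (metis fst_conv lessThan_iff restrict_apply')
      next
        case False
        show ?thesis
        proof (cases "x = b")
          case True then show ?thesis using eq by simp
        next
          case False
          then have "x \<notin> {..<Suc b}" using \<open>\<not> x < b\<close> by auto
          then show ?thesis using f g by (auto simp: PiE_def extensional_def)
        qed
      qed
    qed
  qed
  have sub: "?phi ` ?A' \<subseteq> ?A \<times> {..<k}"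
  proof
    fix p assume "p \<in> ?phi ` ?A'"
    then obtain f where f: "f \<in> ?A'" and p: "p = ?phi f" by blast
    have "restrict f {..<b} ` {..<b} = f ` {..<b}" by auto
    also have "card (f ` {..<b}) \<le> card (f ` {..<Suc b})"
      by (intro card_mono) auto
    finally have c1: "card (restrict f {..<b} ` {..<b}) \<le> M" using f by auto
    have c2: "card (restrict f {..<b} ` {..<b}) \<ge> 1"
      using assms(2) by (simp add: Suc_le_eq card_gt_0_iff lessThan_empty_iff)
    have fP: "f \<in> {..<Suc b} \<rightarrow>\<^sub>E {..<k}" using f by blast
    have r: "restrict f {..<b} \<in> {..<b} \<rightarrow>\<^sub>E {..<k}"
      unfolding restrict_PiE_iff using PiE_mem[OF fP] by simp
    have fb: "f b < k" using PiE_mem[OF fP, of b] by simp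
    have "restrict f {..<b} \<in> ?A" using r c1 c2 by simp
    then show "p \<in> ?A \<times> {..<k}" using p fb by simp
  qed
  have finA: "finite ?A" by (rule finite_subset[OF _ finite_P[of b k]]) auto
  have fin: "finite (?A \<times> {..<k})" using finA by simp
  have "card ?A' \<le> card (?A \<times> {..<k})"
    using card_inj_on_le[OF inj sub fin] .
  also have "\<dots> = card ?A * card {..<k}" by (rule card_cartesian_product)
  also have "card {..<k} = k" by (rule card_lessThan)
  finally have "card ?A' \<le> card ?A * k" .
  then have "real (card ?A') \<le> real (card ?A * k)" by (simp only: of_nat_le_iff)
  then have "real (card ?A') \<le> real (card ?A) * real k" by (simp only: of_nat_mult)
  then have "real (card ?A') / real k ^ Suc b \<le> real (card ?A) * real k / real k ^ Suc b"
    by (rule divide_right_mono) simp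
  also have "\<dots> = real (card ?A) / real k ^ b" using assms(1) by simp
  finally have ineq: "real (card ?A') / real k ^ Suc b \<le> real (card ?A) / real k ^ b" .
  have e1: "(\<Sum>j\<in>{1..M}. occ (Suc b) k j) = real (card ?A') / real k ^ Suc b"
    by (rule occ_sum) simp
  have e2: "(\<Sum>j\<in>{1..M}. occ b k j) = real (card ?A) / real k ^ b"
    by (rule occ_sum) simp
  show ?thesis unfolding e1 e2 by (rule ineq)
qed

lemma occ_bound:
  assumes "k \<ge> 1" "j < b"
  shows "occ b k j \<le> real b ^ 2 / real k"
proof -
  let ?P = "{..<b} \<rightarrow>\<^sub>E {..<k}"
  let ?S = "{f \<in> ?P. card (f ` {..<b}) = j}"
  let ?I = "{(a, a'). a < b \<and> a' < b \<and> a \<noteq> a'}"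
  let ?T = "\<lambda>p. {f \<in> ?P. f (fst p) = f (snd p)}"
  have sub: "?S \<subseteq> (\<Union>p\<in>?I. ?T p)"
  proof
    fix f assume f: "f \<in> ?S"
    have "\<not> inj_on f {..<b}"
    proof
      assume "inj_on f {..<b}"
      then have "card (f ` {..<b}) = b" by (simp add: card_image)
      then show False using f assms(2) by auto
    qed
    then obtain a a' where "a < b" "a' < b" "a \<noteq> a'" "f a = f a'"
      unfolding inj_on_def by auto
    then show "f \<in> (\<Union>p\<in>?I. ?T p)" using f by (intro UN_I[of "(a, a')"]) auto
  qed
  have finI: "finite ?I"
    by (rule finite_subset[of _ "{..<b} \<times> {..<b}"]) auto
  have cardI: "card ?I \<le> b * b"
  proof -
    have "card ?I \<le> card ({..<b} \<times> {..<b})"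
      by (rule card_mono) auto
    then show ?thesis by (simp add: card_cartesian_product)
  qed
  have cardT: "card (?T p) \<le> k ^ (b - 1)" if "p \<in> ?I" for p
  proof -
    obtain a a' where p: "p = (a, a')" and a: "a < b" "a' < b" "a \<noteq> a'"
      using \<open>p \<in> ?I\<close> by auto
    let ?D = "{..<b} - {a'}"
    have inj: "inj_on (\<lambda>f. restrict f ?D) (?T p)"
    proof (rule inj_onI)
      fix f g assume f: "f \<in> ?T p" and g: "g \<in> ?T p" and eq: "restrict f ?D = restrict g ?D"
      have eqD: "f x = g x" if "x \<in> ?D" for x
        using fun_cong[OF eq, of x] that by simp
      show "f = g"
      proof
        fix x
        show "f x = g x"
        proof (cases "x = a'")
          case True
          have "f a' = f a" using f p by simp
          also have "\<dots> = g a" using eqD[of a] a by simp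
          also have "\<dots> = g a'" using g p by simp
          finally show ?thesis using True by simp
        next
          case False
          show ?thesis
          proof (cases "x < b")
            case True then show ?thesis using eqD False by simp
          next
            case False
            then show ?thesis using f g by (auto simp: PiE_def extensional_def)
          qed
        qed
      qed
    qed
    have subD: "(\<lambda>f. restrict f ?D) ` (?T p) \<subseteq> ?D \<rightarrow>\<^sub>E {..<k}"
      by (rule image_subsetI) (auto simp: PiE_iff)
    have fD: "finite (?D \<rightarrow>\<^sub>E {..<k})" by (rule finite_PiE) auto
    have "card (?T p) \<le> card (?D \<rightarrow>\<^sub>E {..<k})"
      by (rule card_inj_on_le[OF inj subD fD])
    also have "\<dots> = (\<Prod>x\<in>?D. card {..<k})" by (rule card_PiE) simp
    also have "\<dots> = k ^ card ?D" by simp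
    also have "card ?D = b - 1" using a by simp
    finally show ?thesis .
  qed
  have finU: "finite (\<Union>p\<in>?I. ?T p)"
    by (rule finite_subset[OF _ finite_P[of b k]]) auto
  have "card ?S \<le> card (\<Union>p\<in>?I. ?T p)"
    by (rule card_mono[OF finU sub])
  also have "\<dots> \<le> (\<Sum>p\<in>?I. card (?T p))" by (rule card_UN_le[OF finI])
  also have "\<dots> \<le> (\<Sum>p\<in>?I. k ^ (b - 1))" by (rule sum_mono) (rule cardT)
  also have "\<dots> = card ?I * k ^ (b - 1)" by simp
  also have "\<dots> \<le> b * b * k ^ (b - 1)" using cardI by simp
  finally have "card ?S \<le> b * b * k ^ (b - 1)" .
  then have "real (card ?S) \<le> real (b * b * k ^ (b - 1))" by (simp only: of_nat_le_iff)
  then have "real (card ?S) \<le> real b * real b * real k ^ (b - 1)" by simp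
  then have "occ b k j \<le> real b * real b * real k ^ (b - 1) / real k ^ b"
    unfolding occ_def by (intro divide_right_mono) auto
  also have "\<dots> = real b ^ 2 / real k"
  proof -
    have "real k ^ b = real k ^ (b - 1) * real k" using assms
      by (metis Suc_diff_1 gr0I less_nat_zero_code power_Suc2)
    then show ?thesis using assms(1) by (simp add: power2_eq_square)
  qed
  finally show ?thesis .
qed



fun pw :: "(nat \<Rightarrow> nat \<Rightarrow> real) \<Rightarrow> nat \<Rightarrow> nat \<Rightarrow> nat \<Rightarrow> nat \<Rightarrow> real" where
  "pw A N 0 i j = (if i = j then 1 else 0)"
| "pw A N (Suc m) i j = (\<Sum>l\<in>{1..N}. pw A N m i l * A l j)"

lemma mpow_pw: "mpow F n m i j = pw (genQ F) n m i j"
  by (induction m arbitrary: j) auto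

lemma pw_lower:
  assumes "\<And>l j. l < j \<Longrightarrow> A l j = 0" "i < j"
  shows "pw A N m i j = 0"
  using assms(2)
proof (induction m arbitrary: j)
  case 0 then show ?case by simp
next
  case (Suc m)
  have *: "pw A N m i l * A l j = 0" for l
    using Suc.IH[of l] assms(1)[of l j] Suc.prems by (cases "i < l") auto
  show ?case by (simp only: pw.simps, rule sum.neutral) (use * in auto)
qed

lemma pw_restrict:
  assumes "\<And>l j. l < j \<Longrightarrow> A l j = 0" "i \<le> n" "n \<le> N"
  shows "pw A n m i j = pw A N m i j"
proof (induction m arbitrary: j)
  case 0 then show ?case by simp
next
  case (Suc m)
  have "(\<Sum>l\<in>{1..N}. pw A N m i l * A l j) = (\<Sum>l\<in>{1..n}. pw A N m i l * A l j)"
    by (rule sum.mono_neutral_right) (use assms pw_lower[OF assms(1)] in auto)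
  then show ?case using Suc.IH by simp
qed

lemma pw_bound:
  assumes "j \<in> {1..N}"
  shows "\<bar>pw A N m i j\<bar> \<le> (\<Sum>l\<in>{1..N}. \<Sum>j\<in>{1..N}. \<bar>A l j\<bar>) ^ m"
  using assms
proof (induction m arbitrary: j)
  case 0 then show ?case by simp
next
  case (Suc m)
  let ?S = "(\<Sum>l\<in>{1..N}. \<Sum>j\<in>{1..N}. \<bar>A l j\<bar>)"
  have S0: "?S \<ge> 0" by (intro sum_nonneg) auto
  have "\<bar>pw A N (Suc m) i j\<bar> \<le> (\<Sum>l\<in>{1..N}. \<bar>pw A N m i l\<bar> * \<bar>A l j\<bar>)"
    unfolding pw.simps abs_mult[symmetric] by (rule sum_abs)
  also have "\<dots> \<le> (\<Sum>l\<in>{1..N}. ?S ^ m * \<bar>A l j\<bar>)"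
    by (intro sum_mono mult_right_mono Suc.IH) auto
  also have "\<dots> = ?S ^ m * (\<Sum>l\<in>{1..N}. \<bar>A l j\<bar>)" by (simp add: sum_distrib_left)
  also have "\<dots> \<le> ?S ^ m * ?S"
  proof (intro mult_left_mono sum_mono)
    fix l assume "l \<in> {1..N}"
    show "\<bar>A l j\<bar> \<le> (\<Sum>j\<in>{1..N}. \<bar>A l j\<bar>)"
      by (rule member_le_sum) (use Suc.prems in auto)
  qed (use S0 in simp)
  finally show ?case by (simp add: mult.commute)
qed

lemma summable_exp_abs: "summable (\<lambda>m. \<bar>x::real\<bar> ^ m / fact m)"
proof -
  have "summable (\<lambda>m. norm (x ^ m /\<^sub>R fact m))" by (rule summable_norm_exp)
  then show ?thesis by (simp add: abs_mult power_abs divide_inverse mult.commute)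
qed

lemma exp_sums_real: "(\<lambda>m. (x::real) ^ m / fact m) sums exp x"
  using exp_converges[of x] by (simp add: divide_inverse mult.commute)

lemma pw_summable:
  assumes "j \<in> {1..N}"
  shows "summable (\<lambda>m. norm (t ^ m / fact m * pw A N m i j))"
proof -
  let ?S = "(\<Sum>l\<in>{1..N}. \<Sum>j\<in>{1..N}. \<bar>A l j\<bar>)"
  show ?thesis
  proof (rule summable_comparison_test'[OF summable_exp_abs[of "t * ?S"]])
    fix m
    have "norm (t ^ m / fact m * pw A N m i j) = \<bar>t\<bar> ^ m / fact m * \<bar>pw A N m i j\<bar>"
      by (simp add: abs_mult power_abs)
    also have "\<dots> \<le> \<bar>t\<bar> ^ m / fact m * ?S ^ m"
      by (intro mult_left_mono pw_bound assms) auto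
    also have "\<dots> = \<bar>t * ?S\<bar> ^ m / fact m"
    proof -
      have "\<bar>?S\<bar> = ?S" by (intro abs_of_nonneg sum_nonneg) auto
      then show ?thesis by (simp add: abs_mult power_mult_distrib)
    qed
    finally show "norm (norm (t ^ m / fact m * pw A N m i j)) \<le> \<bar>t * ?S\<bar> ^ m / fact m"
      by simp
  qed
qed

lemma pw_binomial:
  assumes "j \<in> {1..N}"
  shows "pw (\<lambda>a b. A a b + (if a = b then c else 0)) N m i j
       = (\<Sum>k\<le>m. of_nat (m choose k) * c ^ (m - k) * pw A N k i j)"
  using assms
proof (induction m arbitrary: j)
  case 0 then show ?case by simp
next
  case (Suc m)
  let ?A' = "\<lambda>a b. A a b + (if a = b then c else 0)"
  have "pw ?A' N (Suc m) i j = (\<Sum>l\<in>{1..N}. pw ?A' N m i l * A l j) + c * pw ?A' N m i j"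
  proof -
    have "pw ?A' N (Suc m) i j = (\<Sum>l\<in>{1..N}. pw ?A' N m i l * A l j)
        + (\<Sum>l\<in>{1..N}. pw ?A' N m i l * (if l = j then c else 0))"
      by (simp add: distrib_left sum.distrib)
    also have "(\<Sum>l\<in>{1..N}. pw ?A' N m i l * (if l = j then c else 0)) = c * pw ?A' N m i j"
      using Suc.prems by (simp add: if_distrib cong: if_cong)
    finally show ?thesis .
  qed
  also have "(\<Sum>l\<in>{1..N}. pw ?A' N m i l * A l j)
      = (\<Sum>l\<in>{1..N}. (\<Sum>k\<le>m. of_nat (m choose k) * c ^ (m - k) * pw A N k i l) * A l j)"
    by (intro sum.cong) (auto simp: Suc.IH)
  also have "\<dots> = (\<Sum>k\<le>m. of_nat (m choose k) * c ^ (m - k) * pw A N (Suc k) i j)"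
    by (simp add: sum_distrib_right sum_distrib_left mult.assoc) (rule sum.swap)
  also have "c * pw ?A' N m i j = (\<Sum>k\<le>m. of_nat (m choose k) * c ^ (Suc m - k) * pw A N k i j)"
    using Suc.IH[OF Suc.prems] by (simp add: sum_distrib_left Suc_diff_le mult_ac)
  finally have eq: "pw ?A' N (Suc m) i j =
     (\<Sum>k\<le>m. of_nat (m choose k) * c ^ (m - k) * pw A N (Suc k) i j) +
     (\<Sum>k\<le>m. of_nat (m choose k) * c ^ (Suc m - k) * pw A N k i j)" .
  define g where "g k = c ^ (Suc m - k) * pw A N k i j" for k
  have e1: "(\<Sum>k\<le>m. of_nat (m choose k) * c ^ (m - k) * pw A N (Suc k) i j)
      = (\<Sum>k\<le>m. of_nat (m choose k) * g (Suc k))"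
    by (simp add: g_def mult.assoc)
  have e2: "(\<Sum>k\<le>m. of_nat (m choose k) * c ^ (Suc m - k) * pw A N k i j)
      = (\<Sum>k\<le>m. of_nat (m choose k) * g k)"
    by (simp add: g_def mult.assoc)
  have s1: "(\<Sum>k\<le>Suc m. of_nat (Suc m choose k) * g k)
      = g 0 + (\<Sum>k\<le>m. of_nat (Suc m choose Suc k) * g (Suc k))"
    by (subst sum.atMost_Suc_shift) simp
  have s2: "(\<Sum>k\<le>m. of_nat (Suc m choose Suc k) * g (Suc k))
      = (\<Sum>k\<le>m. of_nat (m choose k) * g (Suc k)) + (\<Sum>k\<le>m. of_nat (m choose Suc k) * g (Suc k))"
    by (simp add: sum.distrib[symmetric] distrib_right)
  have s3: "(\<Sum>k\<le>Suc m. of_nat (m choose k) * g k) = g 0 + (\<Sum>k\<le>m. of_nat (m choose Suc k) * g (Suc k))"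
    by (subst sum.atMost_Suc_shift) simp
  have s4: "(\<Sum>k\<le>Suc m. of_nat (m choose k) * g k) = (\<Sum>k\<le>m. of_nat (m choose k) * g k)"
    by simp
  have "(\<Sum>k\<le>Suc m. of_nat (Suc m choose k) * g k)
      = (\<Sum>k\<le>m. of_nat (m choose k) * g (Suc k)) + (\<Sum>k\<le>m. of_nat (m choose k) * g k)"
    using s1 s2 s3 s4 by linarith
  then show ?case using eq e1 e2 by (simp add: g_def mult.assoc)
qed

lemma pw_unif:
  assumes "j \<in> {1..N}"
  shows "(\<Sum>m. t ^ m / fact m * pw (\<lambda>a b. A a b + (if a = b then c else 0)) N m i j)
       = (\<Sum>m. t ^ m / fact m * pw A N m i j) * exp (c * t)"
proof -
  let ?b = "\<lambda>m. t ^ m / fact m * pw A N m i j"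
  let ?a = "\<lambda>m. (c * t) ^ m / fact m"
  have sa: "summable (\<lambda>m. norm (?a m))"
    using summable_exp_abs[of "c * t"] by (simp add: power_abs)
  have "(\<Sum>m. ?b m) * (\<Sum>m. ?a m) = (\<Sum>m. \<Sum>k\<le>m. ?b k * ?a (m - k))"
    by (rule Cauchy_product[OF pw_summable[OF assms] sa])
  also have "\<dots> = (\<Sum>m. t ^ m / fact m * pw (\<lambda>a b. A a b + (if a = b then c else 0)) N m i j)"
  proof (rule suminf_cong)
    fix m
    have "t ^ m / fact m * pw (\<lambda>a b. A a b + (if a = b then c else 0)) N m i j
        = (\<Sum>k\<le>m. t ^ m / fact m * (of_nat (m choose k) * c ^ (m - k) * pw A N k i j))"
      by (simp add: pw_binomial[OF assms] sum_distrib_left)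
    also have "\<dots> = (\<Sum>k\<le>m. ?b k * ?a (m - k))"
    proof (rule sum.cong)
      fix k assume "k \<in> {..m}"
      then have km: "k \<le> m" by simp
      have tm: "t ^ m = t ^ k * t ^ (m - k)" using km by (simp add: power_add[symmetric])
      have C: "(of_nat (m choose k) :: real) = fact m / (fact k * fact (m - k))"
        using km by (rule binomial_fact)
      have fm: "(fact m :: real) \<noteq> 0" by simp
      have "t ^ m / fact m * (of_nat (m choose k) * c ^ (m - k) * pw A N k i j)
          = (t ^ m / fact m * fact m) / (fact k * fact (m - k)) * c ^ (m - k) * pw A N k i j"
        by (simp add: C)
      also have "t ^ m / fact m * fact m = t ^ m" using fm by simp
      also have "t ^ m / (fact k * fact (m - k)) * c ^ (m - k) * pw A N k i j
          = (t ^ k / fact k * pw A N k i j) * ((c ^ (m - k) * t ^ (m - k)) / fact (m - k))"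
        by (simp add: tm)
      also have "c ^ (m - k) * t ^ (m - k) = (c * t) ^ (m - k)" by (simp add: power_mult_distrib)
      finally show "t ^ m / fact m * (of_nat (m choose k) * c ^ (m - k) * pw A N k i j) = ?b k * ?a (m - k)" .
    qed simp
    finally show "(\<Sum>k\<le>m. ?b k * ?a (m - k)) =
        t ^ m / fact m * pw (\<lambda>a b. A a b + (if a = b then c else 0)) N m i j" by simp
  qed
  finally show ?thesis using exp_sums_real[of "c * t"] by (simp add: sums_iff)
qed

lemma pw_nonneg:
  assumes "\<And>l j. l \<in> {1..N} \<Longrightarrow> A l j \<ge> 0"
  shows "pw A N m i j \<ge> 0"
  by (induction m arbitrary: j) (auto intro!: sum_nonneg mult_nonneg_nonneg assms)

lemma pw_rowsum:
  assumes "\<And>l. l \<in> {1..N} \<Longrightarrow> (\<Sum>j\<in>{1..N}. A l j) = r" "i \<in> {1..N}"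
  shows "(\<Sum>j\<in>{1..N}. pw A N m i j) = r ^ m"
proof (induction m)
  case 0 then show ?case using assms(2) by simp
next
  case (Suc m)
  have "(\<Sum>j\<in>{1..N}. pw A N (Suc m) i j) = (\<Sum>l\<in>{1..N}. pw A N m i l * (\<Sum>j\<in>{1..N}. A l j))"
    by (simp add: sum_distrib_left) (rule sum.swap)
  also have "\<dots> = (\<Sum>l\<in>{1..N}. pw A N m i l * r)"
  proof (intro sum.cong refl)
    fix l assume "l \<in> {1..N}"
    then show "pw A N m i l * (\<Sum>j\<in>{1..N}. A l j) = pw A N m i l * r" using assms(1)[of l] by simp
  qed
  also have "\<dots> = r ^ Suc m" using Suc by (simp add: sum_distrib_right[symmetric])
  finally show ?case .
qed



locale umat =
  fixes B :: "nat \<Rightarrow> nat \<Rightarrow> real" and N :: nat and c :: real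
  assumes nn: "\<And>l j. l \<in> {1..N} \<Longrightarrow> 0 \<le> B l j"
    and low: "\<And>l j. l < j \<Longrightarrow> B l j = 0"
    and row: "\<And>l. l \<in> {1..N} \<Longrightarrow> (\<Sum>j\<in>{1..N}. B l j) = c"
begin

abbreviation "P \<equiv> pw B N"

lemma P_nonneg: "0 \<le> P m i j"
  by (rule pw_nonneg) (rule nn)

lemma c_nonneg: "N \<ge> 1 \<Longrightarrow> 0 \<le> c"
  using row[of 1] nn[of 1] by (metis atLeastAtMost_iff le_refl sum_nonneg)

lemma op_mono:
  assumes hmono: "\<And>a b. 1 \<le> a \<Longrightarrow> a \<le> b \<Longrightarrow> b \<le> N \<Longrightarrow> h b \<le> h a"
    and Bmono: "\<And>M a b. 1 \<le> a \<Longrightarrow> a \<le> b \<Longrightarrow> b \<le> N \<Longrightarrow>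
                  (\<Sum>j\<in>{1..M}. B b j) \<le> (\<Sum>j\<in>{1..M}. B a j)"
    and ab: "1 \<le> a" "a \<le> b" "b \<le> N"
  shows "(\<Sum>l\<in>{1..N}. B b l * h l) \<le> (\<Sum>l\<in>{1..N}. B a l * h l)"
proof -
  define d where "d M = h M - h (Suc M)" for M
  have dnn: "0 \<le> d M" if "M \<in> {1..<N}" for M
    using hmono[of M "Suc M"] that by (auto simp: d_def)
  have decomp: "h l = h N + (\<Sum>M\<in>{1..<N}. if l \<le> M then d M else 0)"
    if "l \<in> {1..N}" for l
  proof -
    have "(\<Sum>M\<in>{1..<N}. if l \<le> M then d M else 0) = (\<Sum>M\<in>{M\<in>{1..<N}. l \<le> M}. d M)"
      by (rule sum.inter_filter[symmetric]) simp
    also have "{M\<in>{1..<N}. l \<le> M} = {l..<N}" using that by auto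
    also have "(\<Sum>M\<in>{l..<N}. d M) = - (\<Sum>M\<in>{l..<N}. h (Suc M) - h M)"
      by (simp only: d_def sum_subtractf)
    also have "(\<Sum>M\<in>{l..<N}. h (Suc M) - h M) = h N - h l"
      using that by (intro sum_Suc_diff') auto
    finally show ?thesis by simp
  qed
  have key: "(\<Sum>l\<in>{1..N}. B i l * h l) = c * h N + (\<Sum>M\<in>{1..<N}. d M * (\<Sum>l\<in>{1..M}. B i l))"
    if "i \<in> {1..N}" for i
  proof -
    have "(\<Sum>l\<in>{1..N}. B i l * h l)
        = (\<Sum>l\<in>{1..N}. B i l * h N + (\<Sum>M\<in>{1..<N}. if l \<le> M then B i l * d M else 0))"
    proof (rule sum.cong[OF refl])
      fix l assume l: "l \<in> {1..N}"
      have "B i l * h l = B i l * h N + B i l * (\<Sum>M\<in>{1..<N}. if l \<le> M then d M else 0)"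
        by (subst decomp[OF l]) (simp only: distrib_left)
      also have "B i l * (\<Sum>M\<in>{1..<N}. if l \<le> M then d M else 0)
          = (\<Sum>M\<in>{1..<N}. if l \<le> M then B i l * d M else 0)"
        by (simp only: sum_distrib_left) (intro sum.cong refl, simp)
      finally show "B i l * h l = B i l * h N + (\<Sum>M\<in>{1..<N}. if l \<le> M then B i l * d M else 0)" .
    qed
    also have "\<dots> = (\<Sum>l\<in>{1..N}. B i l) * h N
        + (\<Sum>M\<in>{1..<N}. \<Sum>l\<in>{1..N}. if l \<le> M then B i l * d M else 0)"
      by (simp only: sum.distrib sum_distrib_right) (simp only: sum.swap[of _ "{1..N}"])
    also have "(\<Sum>l\<in>{1..N}. B i l) = c" using row that by simp
    also have "(\<Sum>M\<in>{1..<N}. \<Sum>l\<in>{1..N}. if l \<le> M then B i l * d M else 0)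
        = (\<Sum>M\<in>{1..<N}. d M * (\<Sum>l\<in>{1..M}. B i l))"
    proof (rule sum.cong[OF refl])
      fix M assume M: "M \<in> {1..<N}"
      have "(\<Sum>l\<in>{1..N}. if l \<le> M then B i l * d M else 0) = (\<Sum>l\<in>{l\<in>{1..N}. l \<le> M}. B i l * d M)"
        by (rule sum.inter_filter[symmetric]) simp
      also have "{l\<in>{1..N}. l \<le> M} = {1..M}" using M by auto
      also have "(\<Sum>l\<in>{1..M}. B i l * d M) = d M * (\<Sum>l\<in>{1..M}. B i l)"
        by (simp add: sum_distrib_left mult.commute)
      finally show "(\<Sum>l\<in>{1..N}. if l \<le> M then B i l * d M else 0) = d M * (\<Sum>l\<in>{1..M}. B i l)" .
    qed
    finally show ?thesis by simp
  qed
  have "(\<Sum>M\<in>{1..<N}. d M * (\<Sum>l\<in>{1..M}. B b l)) \<le> (\<Sum>M\<in>{1..<N}. d M * (\<Sum>l\<in>{1..M}. B a l))"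
    by (intro sum_mono mult_left_mono Bmono dnn ab)
  then show ?thesis using key[of a] key[of b] ab by simp
qed

lemma P_mono:
  assumes hmono: "\<And>a b. 1 \<le> a \<Longrightarrow> a \<le> b \<Longrightarrow> b \<le> N \<Longrightarrow> h b \<le> h a"
    and Bmono: "\<And>M a b. 1 \<le> a \<Longrightarrow> a \<le> b \<Longrightarrow> b \<le> N \<Longrightarrow>
                  (\<Sum>j\<in>{1..M}. B b j) \<le> (\<Sum>j\<in>{1..M}. B a j)"
    and ab: "1 \<le> a" "a \<le> b" "b \<le> N"
  shows "(\<Sum>l\<in>{1..N}. P m b l * h l) \<le> (\<Sum>l\<in>{1..N}. P m a l * h l)"
  using hmono
proof (induction m arbitrary: h)
  case 0
  have "(\<Sum>l\<in>{1..N}. P 0 i l * h l) = h i" if "i \<in> {1..N}" for i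
  proof -
    have "(\<Sum>l\<in>{1..N}. P 0 i l * h l) = (\<Sum>l\<in>{1..N}. if i = l then h l else 0)"
      by (intro sum.cong) auto
    also have "\<dots> = h i" using that by (simp add: sum.delta)
    finally show ?thesis .
  qed
  then show ?case using ab 0[of a b] by simp
next
  case (Suc m)
  define h' where "h' l' = (\<Sum>l\<in>{1..N}. B l' l * h l)" for l'
  have eq: "(\<Sum>l\<in>{1..N}. P (Suc m) i l * h l) = (\<Sum>l'\<in>{1..N}. P m i l' * h' l')" for i
  proof -
    have "(\<Sum>l\<in>{1..N}. P (Suc m) i l * h l) = (\<Sum>l\<in>{1..N}. \<Sum>l'\<in>{1..N}. P m i l' * B l' l * h l)"
      by (simp only: pw.simps sum_distrib_right)
    also have "\<dots> = (\<Sum>l'\<in>{1..N}. \<Sum>l\<in>{1..N}. P m i l' * B l' l * h l)"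
      by (rule sum.swap)
    also have "\<dots> = (\<Sum>l'\<in>{1..N}. P m i l' * h' l')"
      by (simp only: h'_def sum_distrib_left mult.assoc)
    finally show ?thesis .
  qed
  have h'm: "\<And>a b. 1 \<le> a \<Longrightarrow> a \<le> b \<Longrightarrow> b \<le> N \<Longrightarrow> h' b \<le> h' a"
    unfolding h'_def by (rule op_mono[OF Suc.prems Bmono])
  have "(\<Sum>l'\<in>{1..N}. P m b l' * h' l') \<le> (\<Sum>l'\<in>{1..N}. P m a l' * h' l')"
    by (rule Suc.IH[of h', OF h'm])
  then show ?case by (simp only: eq)
qed

lemma tail_exp:
  assumes "K \<le> N" "0 \<le> \<Lambda>" "\<Lambda> \<le> c"
    and LB: "\<And>l. l \<in> {K<..N} \<Longrightarrow> \<Lambda> \<le> (\<Sum>j\<in>{1..K}. B l j)"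
  shows "(\<Sum>j\<in>{K<..N}. P m i j) \<le> (c - \<Lambda>) ^ m"
proof (induction m)
  case 0
  have "(\<Sum>j\<in>{K<..N}. P 0 i j) = (if i \<in> {K<..N} then 1 else 0)"
    by (simp add: sum.delta)
  then show ?case by simp
next
  case (Suc m)
  have perl: "(\<Sum>j\<in>{K<..N}. B l j) \<le> (if K < l then c - \<Lambda> else 0)" if l: "l \<in> {1..N}" for l
  proof (cases "K < l")
    case False
    then have "(\<Sum>j\<in>{K<..N}. B l j) = 0" by (intro sum.neutral) (auto intro: low)
    then show ?thesis using False by simp
  next
    case True
    have "{1..N} = {1..K} \<union> {K<..N}" using assms(1) by auto
    then have "c = (\<Sum>j\<in>{1..K}. B l j) + (\<Sum>j\<in>{K<..N}. B l j)"
      using row[OF l] by (simp add: sum.union_disjoint[symmetric] ivl_disj_int)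
    then show ?thesis using LB[of l] True l by auto
  qed
  have "(\<Sum>j\<in>{K<..N}. P (Suc m) i j) = (\<Sum>l\<in>{1..N}. P m i l * (\<Sum>j\<in>{K<..N}. B l j))"
    by (simp add: sum_distrib_left) (rule sum.swap)
  also have "\<dots> \<le> (\<Sum>l\<in>{1..N}. P m i l * (if K < l then c - \<Lambda> else 0))"
    by (intro sum_mono mult_left_mono perl P_nonneg) auto
  also have "\<dots> = (c - \<Lambda>) * (\<Sum>l\<in>{1..N}. if K < l then P m i l else 0)"
    by (simp add: sum_distrib_left if_distrib mult_ac cong: if_cong)
  also have "(\<Sum>l\<in>{1..N}. if K < l then P m i l else 0) = (\<Sum>l\<in>{K<..N}. P m i l)"
  proof -
    have "(\<Sum>l\<in>{1..N}. if K < l then P m i l else 0) = (\<Sum>l\<in>{l\<in>{1..N}. K < l}. P m i l)"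
      by (rule sum.inter_filter[symmetric]) simp
    also have "{l\<in>{1..N}. K < l} = {K<..N}" by auto
    finally show ?thesis .
  qed
  also have "(c - \<Lambda>) * (\<Sum>l\<in>{K<..N}. P m i l) \<le> (c - \<Lambda>) * (c - \<Lambda>) ^ m"
    using Suc.IH assms by (intro mult_left_mono) auto
  finally show ?case by simp
qed

lemma tail_lyap:
  assumes V0: "\<And>j. 0 \<le> V j" and c0: "0 < c" and i: "i \<in> {1..N}"
    and LV: "\<And>l. l \<in> {1..N} \<Longrightarrow> (\<Sum>j\<in>{1..N}. B l j * V j) \<le> c * V l - (if M < l then 1 else 0)"
  shows "(\<Sum>j\<in>{M<..N}. P m i j) \<le> c ^ (Suc m) * V i / real (Suc m)"
proof -
  define g where "g r = (\<Sum>j\<in>{M<..N}. P r i j)" for r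
  define W where "W r = (\<Sum>j\<in>{1..N}. P r i j * V j)" for r
  have ind: "(\<Sum>l\<in>{1..N}. P r i l * (if M < l then 1 else 0)) = g r" for r
  proof -
    have "(\<Sum>l\<in>{1..N}. P r i l * (if M < l then 1 else 0)) = (\<Sum>l\<in>{1..N}. if M < l then P r i l else 0)"
      by (intro sum.cong) auto
    also have "\<dots> = (\<Sum>l\<in>{l\<in>{1..N}. M < l}. P r i l)" by (rule sum.inter_filter[symmetric]) simp
    also have "{l\<in>{1..N}. M < l} = {M<..N}" by auto
    finally show ?thesis by (simp add: g_def)
  qed
  have W1: "W (Suc r) \<le> c * W r - g r" for r
  proof -
    have "W (Suc r) = (\<Sum>l\<in>{1..N}. P r i l * (\<Sum>j\<in>{1..N}. B l j * V j))"
      by (simp add: W_def sum_distrib_left sum_distrib_right mult_ac) (rule sum.swap)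
    also have "\<dots> \<le> (\<Sum>l\<in>{1..N}. P r i l * (c * V l - (if M < l then 1 else 0)))"
      by (intro sum_mono mult_left_mono LV P_nonneg) auto
    also have "\<dots> = c * W r - g r"
      by (simp add: right_diff_distrib sum_subtractf ind[symmetric] W_def sum_distrib_left mult_ac)
    finally show ?thesis .
  qed
  have g1: "g (Suc r) \<le> c * g r" for r
  proof -
    have perl: "(\<Sum>j\<in>{M<..N}. B l j) \<le> c * (if M < l then 1 else 0)" if l: "l \<in> {1..N}" for l
    proof (cases "M < l")
      case False
      then have "(\<Sum>j\<in>{M<..N}. B l j) = 0" by (intro sum.neutral) (auto intro: low)
      then show ?thesis using False by simp
    next
      case True
      have "(\<Sum>j\<in>{M<..N}. B l j) \<le> (\<Sum>j\<in>{1..N}. B l j)"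
        by (rule sum_mono2) (auto intro: nn l)
      then show ?thesis using row[OF l] True by simp
    qed
    have "g (Suc r) = (\<Sum>l\<in>{1..N}. P r i l * (\<Sum>j\<in>{M<..N}. B l j))"
      by (simp add: g_def sum_distrib_left) (rule sum.swap)
    also have "\<dots> \<le> (\<Sum>l\<in>{1..N}. P r i l * (c * (if M < l then 1 else 0)))"
      by (intro sum_mono mult_left_mono perl P_nonneg) auto
    also have "\<dots> = c * g r" by (simp add: ind[symmetric] sum_distrib_left mult_ac)
    finally show ?thesis .
  qed
  have W0: "W 0 = V i"
  proof -
    have "W 0 = (\<Sum>j\<in>{1..N}. if i = j then V j else 0)"
      unfolding W_def by (intro sum.cong) auto
    also have "\<dots> = V i" using i by (simp add: sum.delta)
    finally show ?thesis .
  qed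
  have Wnn: "0 \<le> W r" for r unfolding W_def by (intro sum_nonneg mult_nonneg_nonneg P_nonneg V0)
  define gh where "gh r = g r / c ^ r" for r
  define Wh where "Wh r = W r / c ^ r" for r
  have cp: "0 < c ^ r" for r using c0 by simp
  have gh1: "gh r \<le> c * (Wh r - Wh (Suc r))" for r
  proof -
    have "g r \<le> c * W r - W (Suc r)" using W1[of r] by simp
    then have "g r / c ^ r \<le> (c * W r - W (Suc r)) / c ^ r"
      by (rule divide_right_mono) (use cp[of r] in simp)
    also have "\<dots> = c * (W r / c ^ r - W (Suc r) / c ^ Suc r)"
      using c0 by (simp add: field_simps)
    finally show ?thesis by (simp add: gh_def Wh_def)
  qed
  have ghdec: "gh (Suc r) \<le> gh r" for r
  proof -
    have "g (Suc r) / c ^ Suc r \<le> (c * g r) / c ^ Suc r"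
      by (rule divide_right_mono[OF g1]) (use cp[of "Suc r"] in simp)
    also have "\<dots> = g r / c ^ r" using c0 by simp
    finally show ?thesis by (simp add: gh_def)
  qed
  have "(\<Sum>r<Suc m. gh r) \<le> (\<Sum>r<Suc m. c * (Wh r - Wh (Suc r)))"
    by (intro sum_mono gh1)
  also have "\<dots> = c * (Wh 0 - Wh (Suc m))"
    by (simp add: sum_distrib_left[symmetric] sum_lessThan_telescope')
  also have "\<dots> \<le> c * V i"
  proof -
    have "0 \<le> Wh (Suc m)" unfolding Wh_def using Wnn[of "Suc m"] cp[of "Suc m"] by (rule divide_nonneg_pos)
    then show ?thesis using W0 c0 by (simp add: Wh_def mult_left_mono)
  qed
  finally have S: "(\<Sum>r<Suc m. gh r) \<le> c * V i" .
  have ghm: "gh m \<le> gh r" if "r \<le> m" for r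
    using lift_Suc_antimono_le[of gh, OF ghdec that] .
  have "(\<Sum>r<Suc m. gh m) \<le> (\<Sum>r<Suc m. gh r)"
    by (rule sum_mono) (use ghm in simp)
  then have "real (Suc m) * gh m \<le> c * V i" using S by simp
  then have gm: "gh m \<le> c * V i / real (Suc m)"
    by (subst pos_le_divide_eq) (simp_all add: mult.commute)
  have "g m = c ^ m * gh m" using c0 by (simp add: gh_def)
  also have "\<dots> \<le> c ^ m * (c * V i / real (Suc m))"
    by (rule mult_left_mono[OF gm]) (use cp[of m] in simp)
  finally have "g m \<le> c ^ m * (c * V i / real (Suc m))" .
  then show ?thesis by (simp add: g_def mult_ac)
qed

end



lemma genQ_lower: "l < j \<Longrightarrow> genQ F l j = 0"
  unfolding genQ_def by simp

lemma choose2_real: "real (l choose 2) * 2 = real l * (real l - 1)"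
proof (induction l)
  case 0 then show ?case by simp
next
  case (Suc l)
  have "Suc l choose 2 = l + (l choose 2)"
    by (simp add: numeral_2_eq_2)
  then have "real (Suc l choose 2) * 2 = 2 * real l + real (l choose 2) * 2" by simp
  also have "\<dots> = real (Suc l) * (real (Suc l) - 1)" using Suc.IH by (simp add: algebra_simps)
  finally show ?case .
qed

lemma genQ_row:
  assumes "1 \<le> l" "l \<le> N"
  shows "(\<Sum>j\<in>{1..N}. genQ F l j * w j) = (\<Sum>j\<in>{1..<l}. rate F l j * (w j - w l))"
proof -
  have "(\<Sum>j\<in>{1..N}. genQ F l j * w j) = (\<Sum>j\<in>{1..<Suc l}. genQ F l j * w j)"
    by (rule sum.mono_neutral_right) (use assms in \<open>auto simp: genQ_lower\<close>)
  also have "\<dots> = (\<Sum>j\<in>{1..<l}. genQ F l j * w j) + genQ F l l * w l"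
    using assms by (simp add: sum.atLeastLessThan_Suc)
  also have "(\<Sum>j\<in>{1..<l}. genQ F l j * w j) = (\<Sum>j\<in>{1..<l}. rate F l j * w j)"
    by (intro sum.cong) (auto simp: genQ_def)
  also have "genQ F l l * w l = - (\<Sum>j\<in>{1..<l}. rate F l j * w l)"
    by (simp add: genQ_def sum_distrib_right)
  finally show ?thesis by (simp add: right_diff_distrib sum_subtractf)
qed

definition Bm :: "(nat \<Rightarrow> real) \<Rightarrow> real \<Rightarrow> nat \<Rightarrow> nat \<Rightarrow> real" where
  "Bm F c a b = genQ F a b + (if a = b then c else 0)"

definition cc :: "(nat \<Rightarrow> real) \<Rightarrow> nat \<Rightarrow> real \<Rightarrow> real" where
  "cc F N X = X + (\<Sum>l\<in>{1..N}. \<Sum>j\<in>{1..<l}. rate F l j)"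

lemma Bm_eq: "Bm F c = (\<lambda>a b. genQ F a b + (if a = b then c else 0))"
  by (intro ext) (simp add: Bm_def)

lemma trans_lower: "i < j \<Longrightarrow> trans F N t i j = 0"
  unfolding trans_def mpow_pw by (simp add: pw_lower[OF genQ_lower])

lemma trans_restrict: "i \<le> n \<Longrightarrow> n \<le> N \<Longrightarrow> trans F n t i j = trans F N t i j"
  unfolding trans_def mpow_pw by (simp add: pw_restrict[OF genQ_lower])

locale Fctx =
  fixes F :: "nat \<Rightarrow> real"
  assumes Fnn: "\<And>k. 0 \<le> F k" and Fsum: "summable (\<lambda>k. F (Suc k) / real (Suc k))"
begin

lemma rate_term_summable:
  assumes "j < b"
  shows "summable (\<lambda>k. F (Suc k) * occ b (Suc k) j)"
proof -
  have g: "summable (\<lambda>k. real b ^ 2 * (F (Suc k) / real (Suc k)))"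
    by (rule summable_mult[OF Fsum])
  have le: "norm (F (Suc k) * occ b (Suc k) j) \<le> real b ^ 2 * (F (Suc k) / real (Suc k))" for k
  proof -
    have "occ b (Suc k) j \<le> real b ^ 2 / real (Suc k)"
      by (rule occ_bound) (use assms in auto)
    then have "F (Suc k) * occ b (Suc k) j \<le> F (Suc k) * (real b ^ 2 / real (Suc k))"
      by (rule mult_left_mono) (rule Fnn)
    moreover have "0 \<le> F (Suc k) * occ b (Suc k) j"
      using Fnn[of "Suc k"] occ_nonneg[of b "Suc k" j] by simp
    ultimately show ?thesis by (simp add: mult_ac)
  qed
  show ?thesis by (rule summable_comparison_test'[OF g le])
qed

lemma rate_nonneg:
  assumes "j < b" shows "0 \<le> rate F b j"
proof -
  have "0 \<le> (if j + 1 = b then F 0 * real (b choose 2) else 0)"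
    using Fnn[of 0] by simp
  moreover have "0 \<le> (\<Sum>k. F (Suc k) * occ b (Suc k) j)"
    by (intro suminf_nonneg rate_term_summable[OF assms] mult_nonneg_nonneg Fnn occ_nonneg)
  ultimately show ?thesis unfolding rate_def by simp
qed

lemma rate_sum:
  assumes "finite J" "\<And>j. j \<in> J \<Longrightarrow> j < b"
  shows "(\<Sum>j\<in>J. rate F b j) = (\<Sum>j\<in>J. if j + 1 = b then F 0 * real (b choose 2) else 0)
           + (\<Sum>k. F (Suc k) * (\<Sum>j\<in>J. occ b (Suc k) j))"
proof -
  have "(\<Sum>j\<in>J. rate F b j) = (\<Sum>j\<in>J. if j + 1 = b then F 0 * real (b choose 2) else 0)
        + (\<Sum>j\<in>J. \<Sum>k. F (Suc k) * occ b (Suc k) j)"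
    unfolding rate_def sum.distrib by (rule refl)
  also have "(\<Sum>j\<in>J. \<Sum>k. F (Suc k) * occ b (Suc k) j) = (\<Sum>k. \<Sum>j\<in>J. F (Suc k) * occ b (Suc k) j)"
    by (rule suminf_sum[symmetric]) (rule rate_term_summable, rule assms(2))
  also have "\<dots> = (\<Sum>k. F (Suc k) * (\<Sum>j\<in>J. occ b (Suc k) j))"
    by (simp only: sum_distrib_left)
  finally show ?thesis .
qed

lemma rate_sum_summable:
  assumes "\<And>j. j \<in> J \<Longrightarrow> j < b"
  shows "summable (\<lambda>k. F (Suc k) * (\<Sum>j\<in>J. occ b (Suc k) j))"
proof -
  have "summable (\<lambda>k. \<Sum>j\<in>J. F (Suc k) * occ b (Suc k) j)"
    by (rule summable_sum) (rule rate_term_summable, rule assms)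
  then show ?thesis by (simp only: sum_distrib_left)
qed

lemma rate_total_le:
  assumes F0: "F 0 = 0" and sF: "summable (\<lambda>k. F (Suc k))"
  shows "(\<Sum>j\<in>{1..<b}. rate F b j) \<le> (\<Sum>k. F (Suc k))"
proof -
  have "(\<Sum>j\<in>{1..<b}. rate F b j) = (\<Sum>j\<in>{1..<b}. if j + 1 = b then F 0 * real (b choose 2) else 0)
           + (\<Sum>k. F (Suc k) * (\<Sum>j\<in>{1..<b}. occ b (Suc k) j))"
    by (rule rate_sum) auto
  also have "(\<Sum>j\<in>{1..<b}. if j + 1 = b then F 0 * real (b choose 2) else 0) = 0"
    by (intro sum.neutral) (simp add: F0)
  also have "(\<Sum>k. F (Suc k) * (\<Sum>j\<in>{1..<b}. occ b (Suc k) j)) \<le> (\<Sum>k. F (Suc k))"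
  proof (rule suminf_le)
    fix k
    have "(\<Sum>j\<in>{1..<b}. occ b (Suc k) j) \<le> 1" by (rule occ_le1) auto
    then show "F (Suc k) * (\<Sum>j\<in>{1..<b}. occ b (Suc k) j) \<le> F (Suc k)"
      using Fnn[of "Suc k"] by (simp add: mult_left_le)
  qed (rule rate_sum_summable, simp, rule sF)
  finally show ?thesis by simp
qed

lemma rate_low_ge:
  assumes "M < b"
  shows "(\<Sum>k<M. F (Suc k)) \<le> (\<Sum>j\<in>{1..M}. rate F b j)"
proof -
  have eq: "(\<Sum>j\<in>{1..M}. rate F b j) = (\<Sum>j\<in>{1..M}. if j + 1 = b then F 0 * real (b choose 2) else 0)
           + (\<Sum>k. F (Suc k) * (\<Sum>j\<in>{1..M}. occ b (Suc k) j))"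
    by (rule rate_sum) (use assms in auto)
  have k0: "0 \<le> (\<Sum>j\<in>{1..M}. if j + 1 = b then F 0 * real (b choose 2) else 0)"
    by (intro sum_nonneg) (auto intro: mult_nonneg_nonneg Fnn)
  have "(\<Sum>k<M. F (Suc k)) = (\<Sum>k<M. F (Suc k) * (\<Sum>j\<in>{1..M}. occ b (Suc k) j))"
  proof (intro sum.cong refl)
    fix k assume "k \<in> {..<M}"
    then have "(\<Sum>j\<in>{1..M}. occ b (Suc k) j) = 1"
      using assms by (intro occ_eq1) auto
    then show "F (Suc k) = F (Suc k) * (\<Sum>j\<in>{1..M}. occ b (Suc k) j)" by simp
  qed
  also have "\<dots> \<le> (\<Sum>k. F (Suc k) * (\<Sum>j\<in>{1..M}. occ b (Suc k) j))"
  proof (rule sum_le_suminf)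
    show "summable (\<lambda>k. F (Suc k) * (\<Sum>j\<in>{1..M}. occ b (Suc k) j))"
      by (rule rate_sum_summable) (use assms in auto)
  qed (auto intro!: mult_nonneg_nonneg Fnn sum_nonneg occ_nonneg)
  finally show ?thesis using eq k0 by linarith
qed

lemma rate_step_mono:
  assumes "M < b"
  shows "(\<Sum>j\<in>{1..M}. rate F (Suc b) j) \<le> (\<Sum>j\<in>{1..M}. rate F b j)"
proof -
  have e1: "(\<Sum>j\<in>{1..M}. rate F (Suc b) j) = (\<Sum>j\<in>{1..M}. if j + 1 = Suc b then F 0 * real (Suc b choose 2) else 0)
           + (\<Sum>k. F (Suc k) * (\<Sum>j\<in>{1..M}. occ (Suc b) (Suc k) j))"
    by (rule rate_sum) (use assms in auto)
  have e2: "(\<Sum>j\<in>{1..M}. rate F b j) = (\<Sum>j\<in>{1..M}. if j + 1 = b then F 0 * real (b choose 2) else 0)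
           + (\<Sum>k. F (Suc k) * (\<Sum>j\<in>{1..M}. occ b (Suc k) j))"
    by (rule rate_sum) (use assms in auto)
  have z: "(\<Sum>j\<in>{1..M}. if j + 1 = Suc b then F 0 * real (Suc b choose 2) else 0) = 0"
    by (rule sum.neutral) (use assms in auto)
  have k0: "0 \<le> (\<Sum>j\<in>{1..M}. if j + 1 = b then F 0 * real (b choose 2) else 0)"
    by (intro sum_nonneg) (auto intro: mult_nonneg_nonneg Fnn)
  have "(\<Sum>k. F (Suc k) * (\<Sum>j\<in>{1..M}. occ (Suc b) (Suc k) j)) \<le> (\<Sum>k. F (Suc k) * (\<Sum>j\<in>{1..M}. occ b (Suc k) j))"
  proof (rule suminf_le)
    fix k
    show "F (Suc k) * (\<Sum>j\<in>{1..M}. occ (Suc b) (Suc k) j) \<le> F (Suc k) * (\<Sum>j\<in>{1..M}. occ b (Suc k) j)"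
      by (rule mult_left_mono[OF occ_mono Fnn]) (use assms in auto)
  next
    show "summable (\<lambda>k. F (Suc k) * (\<Sum>j\<in>{1..M}. occ (Suc b) (Suc k) j))"
      by (rule rate_sum_summable) (use assms in auto)
  next
    show "summable (\<lambda>k. F (Suc k) * (\<Sum>j\<in>{1..M}. occ b (Suc k) j))"
      by (rule rate_sum_summable) (use assms in auto)
  qed
  then show ?thesis using e1 e2 z k0 by linarith
qed

lemma rate_mono:
  assumes "M < a" "a \<le> b"
  shows "(\<Sum>j\<in>{1..M}. rate F b j) \<le> (\<Sum>j\<in>{1..M}. rate F a j)"
  using assms(2)
proof (induction b rule: dec_induct)
  case base then show ?case by simp
next
  case (step n)
  have "(\<Sum>j\<in>{1..M}. rate F (Suc n) j) \<le> (\<Sum>j\<in>{1..M}. rate F n j)"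
    by (rule rate_step_mono) (use assms step in auto)
  then show ?case using step by linarith
qed

lemma Bm_umat:
  assumes "0 \<le> X"
  shows "umat (Bm F (cc F N X)) N (cc F N X)"
proof
  let ?c = "cc F N X"
  fix l j :: nat
  assume l: "l \<in> {1..N}"
  have inner: "(\<Sum>j\<in>{1..<l}. rate F l j) \<le> (\<Sum>l\<in>{1..N}. \<Sum>j\<in>{1..<l}. rate F l j)"
    by (rule member_le_sum[OF l]) (auto intro!: sum_nonneg rate_nonneg)
  show "0 \<le> Bm F ?c l j"
  proof (cases "j < l")
    case True
    then show ?thesis by (simp add: Bm_def genQ_def rate_nonneg)
  next
    case False
    show ?thesis
    proof (cases "j = l")
      case True
      then show ?thesis using inner assms by (simp add: Bm_def genQ_def cc_def)
    next
      case False
      then show ?thesis using \<open>\<not> j < l\<close> by (simp add: Bm_def genQ_def)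
    qed
  qed
next
  fix l j :: nat
  assume "l < j"
  then show "Bm F (cc F N X) l j = 0" by (simp add: Bm_def genQ_def)
next
  fix l assume l: "l \<in> {1..N}"
  have "(\<Sum>j\<in>{1..N}. Bm F (cc F N X) l j) = (\<Sum>j\<in>{1..N}. genQ F l j * 1) + (\<Sum>j\<in>{1..N}. if l = j then cc F N X else 0)"
    by (simp add: Bm_def sum.distrib)
  also have "(\<Sum>j\<in>{1..N}. genQ F l j * 1) = 0"
    using genQ_row[of l N F "\<lambda>_. 1"] l by simp
  also have "(\<Sum>j\<in>{1..N}. if l = j then cc F N X else 0) = cc F N X"
    using l by (simp add: sum.delta)
  finally show "(\<Sum>j\<in>{1..N}. Bm F (cc F N X) l j) = cc F N X" by simp
qed

end



definition aa :: "(nat \<Rightarrow> real) \<Rightarrow> real \<Rightarrow> nat \<Rightarrow> nat \<Rightarrow> real" where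
  "aa F t M n = (\<Sum>j\<in>{1..M}. trans F n t n j)"

lemma diag_mpow: "mpow F n m n n = genQ F n n ^ m"
proof (induction m)
  case 0 then show ?case by (simp add: mpow_pw)
next
  case (Suc m)
  show ?case
  proof (cases "n \<in> {1..n}")
    case True
    have "mpow F n (Suc m) n n = (\<Sum>l\<in>{1..n}. mpow F n m n l * genQ F l n)"
      by (simp add: mpow_pw)
    also have "\<dots> = mpow F n m n n * genQ F n n + (\<Sum>l\<in>{1..n} - {n}. mpow F n m n l * genQ F l n)"
      by (simp only: sum.remove[OF finite_atLeastAtMost True])
    also have "(\<Sum>l\<in>{1..n} - {n}. mpow F n m n l * genQ F l n) = 0"
      by (rule sum.neutral) (auto simp: genQ_lower)
    finally show ?thesis using Suc.IH by simp
  next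
    case False
    then have "n = 0" by auto
    then show ?thesis by (simp add: mpow_pw genQ_def)
  qed
qed

lemma trans_diag: "trans F n t n n = exp (t * genQ F n n)"
proof -
  have "(\<lambda>m. t ^ m / fact m * mpow F n m n n) = (\<lambda>m. (t * genQ F n n) ^ m / fact m)"
    by (intro ext) (simp add: diag_mpow power_mult_distrib)
  then show ?thesis unfolding trans_def using exp_sums_real[of "t * genQ F n n"]
    by (simp add: sums_iff)
qed

context Fctx begin

lemma U_nonneg: "0 \<le> X \<Longrightarrow> 0 \<le> pw (Bm F (cc F N X)) N m i j"
  using umat.P_nonneg[OF Bm_umat] .

lemma U_summable: "j \<in> {1..N} \<Longrightarrow> summable (\<lambda>m. t ^ m / fact m * pw (Bm F (cc F N X)) N m i j)"
  by (rule summable_norm_cancel[OF pw_summable])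

lemma trans_unif:
  assumes "j \<in> {1..N}"
  shows "trans F N t i j = exp (- (cc F N X * t)) * (\<Sum>m. t ^ m / fact m * pw (Bm F (cc F N X)) N m i j)"
proof -
  have eq: "(\<Sum>m. t ^ m / fact m * pw (Bm F (cc F N X)) N m i j) = trans F N t i j * exp (cc F N X * t)"
    unfolding Bm_eq trans_def mpow_pw by (rule pw_unif[OF assms])
  have "exp (- (cc F N X * t)) * exp (cc F N X * t) = 1" using exp_add[of "- (cc F N X * t)" "cc F N X * t"] by simp
  then show ?thesis unfolding eq by (simp add: mult_ac)
qed

lemma U_wsum_summable:
  assumes "J \<subseteq> {1..N}"
  shows "summable (\<lambda>m. t ^ m / fact m * (\<Sum>j\<in>J. pw (Bm F (cc F N X)) N m i j * h j))"
proof -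
  have "summable (\<lambda>m. \<Sum>j\<in>J. t ^ m / fact m * pw (Bm F (cc F N X)) N m i j * h j)"
    by (rule summable_sum, rule summable_mult2, rule U_summable) (use assms in auto)
  then show ?thesis by (simp add: sum_distrib_left mult.assoc)
qed

lemma trans_wsum:
  assumes "J \<subseteq> {1..N}"
  shows "(\<Sum>j\<in>J. trans F N t i j * h j)
       = exp (- (cc F N X * t)) * (\<Sum>m. t ^ m / fact m * (\<Sum>j\<in>J. pw (Bm F (cc F N X)) N m i j * h j))"
proof -
  let ?U = "pw (Bm F (cc F N X)) N"
  let ?e = "exp (- (cc F N X * t))"
  have "(\<Sum>j\<in>J. trans F N t i j * h j) = (\<Sum>j\<in>J. ?e * ((\<Sum>m. t ^ m / fact m * ?U m i j) * h j))"
  proof (intro sum.cong refl)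
    fix j assume "j \<in> J"
    then have "j \<in> {1..N}" using assms by auto
    then show "trans F N t i j * h j = ?e * ((\<Sum>m. t ^ m / fact m * ?U m i j) * h j)"
      by (subst trans_unif[of j N t i X]) (simp_all add: mult_ac)
  qed
  also have "\<dots> = ?e * (\<Sum>j\<in>J. \<Sum>m. t ^ m / fact m * ?U m i j * h j)"
  proof -
    have "(\<Sum>m. t ^ m / fact m * ?U m i j) * h j = (\<Sum>m. t ^ m / fact m * ?U m i j * h j)"
      if "j \<in> J" for j
      using that assms by (intro suminf_mult2 U_summable) auto
    then show ?thesis by (simp add: sum_distrib_left)
  qed
  also have "(\<Sum>j\<in>J. \<Sum>m. t ^ m / fact m * ?U m i j * h j) = (\<Sum>m. \<Sum>j\<in>J. t ^ m / fact m * ?U m i j * h j)"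
    by (rule suminf_sum[symmetric], rule summable_mult2, rule U_summable) (use assms in auto)
  also have "\<dots> = (\<Sum>m. t ^ m / fact m * (\<Sum>j\<in>J. ?U m i j * h j))"
    by (simp add: sum_distrib_left mult.assoc)
  finally show ?thesis .
qed

lemma trans_sum:
  assumes "J \<subseteq> {1..N}"
  shows "(\<Sum>j\<in>J. trans F N t i j)
       = exp (- (cc F N X * t)) * (\<Sum>m. t ^ m / fact m * (\<Sum>j\<in>J. pw (Bm F (cc F N X)) N m i j))"
  using trans_wsum[OF assms, of t i "\<lambda>_. 1" X] by simp

lemma trans_nonneg:
  assumes "0 \<le> t" "1 \<le> j" "i \<le> N"
  shows "0 \<le> trans F N t i j"
proof (cases "j \<le> N")
  case True
  then have j: "j \<in> {1..N}" using assms by auto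
  show ?thesis
    unfolding trans_unif[OF j, of t i 0]
    by (intro mult_nonneg_nonneg suminf_nonneg U_summable[OF j] U_nonneg divide_nonneg_nonneg)
       (use assms in auto)
next
  case False
  then show ?thesis using assms trans_lower[of i j F N t] by simp
qed

lemma trans_rowsum:
  assumes "i \<in> {1..N}"
  shows "(\<Sum>j\<in>{1..N}. trans F N t i j) = 1"
proof -
  let ?c = "cc F N 0"
  have r: "(\<Sum>j\<in>{1..N}. pw (Bm F ?c) N m i j) = ?c ^ m" for m
    by (rule pw_rowsum[OF umat.row[OF Bm_umat] assms]) auto
  have "(\<Sum>j\<in>{1..N}. trans F N t i j) = exp (- (?c * t)) * (\<Sum>m. t ^ m / fact m * (\<Sum>j\<in>{1..N}. pw (Bm F ?c) N m i j))"
    by (rule trans_sum) simp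
  also have "(\<lambda>m. t ^ m / fact m * (\<Sum>j\<in>{1..N}. pw (Bm F ?c) N m i j)) = (\<lambda>m. (?c * t) ^ m / fact m)"
    unfolding r by (intro ext) (simp add: power_mult_distrib mult_ac)
  also have "(\<Sum>m. (?c * t) ^ m / fact m) = exp (?c * t)"
    using exp_sums_real[of "?c * t"] by (simp add: sums_iff)
  also have "exp (- (?c * t)) * exp (?c * t) = 1" using exp_add[of "- (?c * t)" "?c * t"] by simp
  finally show ?thesis .
qed

lemma aa_alt:
  assumes "1 \<le> n" "n \<le> N"
  shows "aa F t M n = (\<Sum>j\<in>{1..N}. trans F N t n j * (if j \<le> M then 1 else 0))"
proof -
  let ?T = "\<lambda>j. trans F N t n j"
  have "aa F t M n = (\<Sum>j\<in>{1..M}. ?T j)"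
    unfolding aa_def using assms by (intro sum.cong refl trans_restrict) auto
  also have "\<dots> = (\<Sum>j\<in>{j\<in>{1..N}. j \<le> M}. ?T j)"
    by (rule sum.mono_neutral_right) (use assms in \<open>auto intro: trans_lower\<close>)
  also have "\<dots> = (\<Sum>j\<in>{1..N}. if j \<le> M then ?T j else 0)"
    by (rule sum.inter_filter) simp
  also have "\<dots> = (\<Sum>j\<in>{1..N}. ?T j * (if j \<le> M then 1 else 0))"
    by (intro sum.cong refl) simp
  finally show ?thesis .
qed

lemma Bm_s_eq: "(\<Sum>j\<in>{1..M}. Bm F c x j) = (\<Sum>j\<in>{1..min M x}. Bm F c x j)"
  by (rule sum.mono_neutral_right) (auto simp: Bm_def genQ_def)

lemma Bm_Mmono:
  assumes X: "0 \<le> X" and ab: "1 \<le> a" "a \<le> b" "b \<le> N"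
  shows "(\<Sum>j\<in>{1..M}. Bm F (cc F N X) b j) \<le> (\<Sum>j\<in>{1..M}. Bm F (cc F N X) a j)"
proof -
  let ?c = "cc F N X"
  let ?B = "Bm F ?c"
  interpret umat ?B N ?c by (rule Bm_umat[OF X])
  have le_c: "(\<Sum>j\<in>{1..M}. ?B x j) \<le> ?c" if "x \<in> {1..N}" for x
  proof -
    have "(\<Sum>j\<in>{1..M}. ?B x j) = (\<Sum>j\<in>{1..min M x}. ?B x j)" by (rule Bm_s_eq)
    also have "\<dots> \<le> (\<Sum>j\<in>{1..N}. ?B x j)"
      by (rule sum_mono2) (use that nn in auto)
    also have "\<dots> = ?c" by (rule row[OF that])
    finally show ?thesis .
  qed
  have eq_c: "(\<Sum>j\<in>{1..M}. ?B x j) = ?c" if "x \<in> {1..N}" "x \<le> M" for x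
  proof -
    have "(\<Sum>j\<in>{1..M}. ?B x j) = (\<Sum>j\<in>{1..x}. ?B x j)" using Bm_s_eq[where M=M and c="?c" and x=x] that by simp
    also have "\<dots> = (\<Sum>j\<in>{1..N}. ?B x j)"
      by (rule sum.mono_neutral_left) (use that in \<open>auto intro: low\<close>)
    also have "\<dots> = ?c" by (rule row[OF that(1)])
    finally show ?thesis .
  qed
  have eq_r: "(\<Sum>j\<in>{1..M}. ?B x j) = (\<Sum>j\<in>{1..M}. rate F x j)" if "M < x" for x
    by (intro sum.cong refl) (use that in \<open>auto simp: Bm_def genQ_def\<close>)
  show ?thesis
  proof (cases "a \<le> M")
    case True
    then show ?thesis using le_c[of b] eq_c[of a] ab by auto
  next
    case False
    then show ?thesis using eq_r[of a] eq_r[of b] rate_mono[of M a b] ab by auto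
  qed
qed

lemma aa_mono:
  assumes "1 \<le> n" "0 \<le> t"
  shows "aa F t M (Suc n) \<le> aa F t M n"
proof -
  let ?N = "Suc n"
  let ?c = "cc F ?N 0"
  let ?B = "Bm F ?c"
  let ?h = "\<lambda>j::nat. if j \<le> M then 1 else (0::real)"
  interpret umat ?B ?N ?c by (rule Bm_umat) simp
  have "aa F t M (Suc n) = exp (- (?c * t)) * (\<Sum>m. t ^ m / fact m * (\<Sum>j\<in>{1..?N}. P m ?N j * ?h j))"
    using aa_alt[of "Suc n" ?N t M] trans_wsum[of "{1..?N}" ?N t ?N ?h 0] by simp
  also have "\<dots> \<le> exp (- (?c * t)) * (\<Sum>m. t ^ m / fact m * (\<Sum>j\<in>{1..?N}. P m n j * ?h j))"
  proof (rule mult_left_mono, rule suminf_le)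
    fix m
    have hm: "\<And>a b. 1 \<le> a \<Longrightarrow> a \<le> b \<Longrightarrow> b \<le> ?N \<Longrightarrow> ?h b \<le> ?h a" by auto
    have bm: "\<And>M' a b. 1 \<le> a \<Longrightarrow> a \<le> b \<Longrightarrow> b \<le> ?N \<Longrightarrow>
              (\<Sum>j\<in>{1..M'}. ?B b j) \<le> (\<Sum>j\<in>{1..M'}. ?B a j)"
      by (rule Bm_Mmono) auto
    have "(\<Sum>j\<in>{1..?N}. P m ?N j * ?h j) \<le> (\<Sum>j\<in>{1..?N}. P m n j * ?h j)"
      by (rule P_mono[OF hm bm]) (use assms in auto)
    then show "t ^ m / fact m * (\<Sum>j\<in>{1..?N}. P m ?N j * ?h j) \<le> t ^ m / fact m * (\<Sum>j\<in>{1..?N}. P m n j * ?h j)"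
      by (rule mult_left_mono) (use assms in auto)
  next
    show "summable (\<lambda>m. t ^ m / fact m * (\<Sum>j\<in>{1..?N}. P m ?N j * ?h j))"
      by (rule U_wsum_summable) simp
  next
    show "summable (\<lambda>m. t ^ m / fact m * (\<Sum>j\<in>{1..?N}. P m n j * ?h j))"
      by (rule U_wsum_summable) simp
  qed simp
  also have "\<dots> = aa F t M n"
    using aa_alt[of n ?N t M] trans_wsum[of "{1..?N}" ?N t n ?h 0] assms by simp
  finally show ?thesis .
qed

lemma aa_bounds:
  assumes "1 \<le> n" "0 \<le> t"
  shows "0 \<le> aa F t M n" "aa F t M n \<le> 1"
proof -
  show "0 \<le> aa F t M n" unfolding aa_def
    by (intro sum_nonneg trans_nonneg) (use assms in auto)
  have "aa F t M n = (\<Sum>j\<in>{1..n}. trans F n t n j * (if j \<le> M then 1 else 0))"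
    by (rule aa_alt) (use assms in auto)
  also have "\<dots> \<le> (\<Sum>j\<in>{1..n}. trans F n t n j)"
    by (intro sum_mono) (use assms trans_nonneg in auto)
  also have "\<dots> = 1" by (rule trans_rowsum) (use assms in auto)
  finally show "aa F t M n \<le> 1" .
qed

lemma aa_conv:
  assumes "0 \<le> t"
  shows "convergent (\<lambda>n. aa F t M n)"
proof (rule Bseq_monoseq_convergent'_dec[where M=1])
  show "Bseq (\<lambda>n. aa F t M (n + 1))"
    by (rule BseqI'[where K=1]) (use aa_bounds assms in auto)
  show "aa F t M n' \<le> aa F t M m'" if "1 \<le> m'" "m' \<le> n'" for m' n'
    using that(2)
  proof (induction n' rule: dec_induct)
    case base then show ?case by simp
  next
    case (step k)
    have "aa F t M (Suc k) \<le> aa F t M k" by (rule aa_mono) (use that step assms in auto)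
    then show ?case using step by linarith
  qed
qed

lemma lim_aa_le:
  assumes "0 \<le> t" "\<And>n. nz \<le> n \<Longrightarrow> aa F t M n \<le> L"
  shows "lim (\<lambda>n. aa F t M n) \<le> L"
  using aa_conv[OF assms(1)] assms(2)
  by (intro LIMSEQ_le_const2[of "\<lambda>n. aa F t M n"]) (auto simp: convergent_LIMSEQ_iff)

lemma lim_aa_ge:
  assumes "0 \<le> t" "\<And>n. nz \<le> n \<Longrightarrow> L \<le> aa F t M n"
  shows "L \<le> lim (\<lambda>n. aa F t M n)"
  using aa_conv[OF assms(1)] assms(2)
  by (intro LIMSEQ_le_const[of "\<lambda>n. aa F t M n"]) (auto simp: convergent_LIMSEQ_iff)

lemma aa_tail:
  assumes "M < n"
  shows "aa F t M n = 1 - (\<Sum>j\<in>{M<..n}. trans F n t n j)"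
proof -
  have "{1..n} = {1..M} \<union> {M<..n}" using assms by auto
  then have "(\<Sum>j\<in>{1..n}. trans F n t n j) = (\<Sum>j\<in>{1..M}. trans F n t n j) + (\<Sum>j\<in>{M<..n}. trans F n t n j)"
    by (simp add: sum.union_disjoint ivl_disj_int)
  moreover have "(\<Sum>j\<in>{1..n}. trans F n t n j) = 1" by (rule trans_rowsum) (use assms in auto)
  ultimately show ?thesis unfolding aa_def by simp
qed

lemma aa_one:
  assumes "1 \<le> n" "n \<le> M"
  shows "aa F t M n = 1"
proof -
  have "aa F t M n = (\<Sum>j\<in>{1..n}. trans F n t n j)"
    unfolding aa_def by (rule sum.mono_neutral_right) (use assms in \<open>auto intro: trans_lower\<close>)
  also have "\<dots> = 1" by (rule trans_rowsum) (use assms in auto)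
  finally show ?thesis .
qed

lemma lim_lower:
  assumes "0 \<le> t" "0 \<le> \<delta>" "\<And>n. M < n \<Longrightarrow> (\<Sum>j\<in>{M<..n}. trans F n t n j) \<le> \<delta>"
  shows "1 - \<delta> \<le> lim (\<lambda>n. aa F t M n)"
proof (rule lim_aa_ge[where nz=1, OF assms(1)])
  fix n :: nat assume n: "1 \<le> n"
  show "1 - \<delta> \<le> aa F t M n"
  proof (cases "M < n")
    case True then show ?thesis using aa_tail[OF True, of t] assms(3)[OF True] by simp
  next
    case False then show ?thesis using aa_one[of n M t] n assms(2) by simp
  qed
qed

lemma lim_upper: "0 \<le> t \<Longrightarrow> lim (\<lambda>n. aa F t M n) \<le> 1"
  by (rule lim_aa_le[where nz=1]) (use aa_bounds in auto)

end



context Fctx begin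

lemma U_sum_summable:
  assumes "J \<subseteq> {1..N}"
  shows "summable (\<lambda>m. t ^ m / fact m * (\<Sum>j\<in>J. pw (Bm F (cc F N X)) N m i j))"
  using U_wsum_summable[OF assms, of t X i "\<lambda>_. 1"] by simp

lemma notdown:
  assumes F0: "F 0 = 0" and sF: "summable (\<lambda>k. F (Suc k))"
  shows "\<not> comes_down_from_infinity F"
proof
  assume cd: "comes_down_from_infinity F"
  define \<Lambda> where "\<Lambda> = (\<Sum>k. F (Suc k))"
  have bound: "lim (\<lambda>n. aa F 1 M n) \<le> 1 - exp (- \<Lambda>)" for M
  proof (rule lim_aa_le[where nz="Suc M"])
    fix n assume n: "Suc M \<le> n"
    have sub: "{1..M} \<subseteq> {1..n} - {n}" using n by auto
    have "aa F 1 M n \<le> (\<Sum>j\<in>{1..n} - {n}. trans F n 1 n j)"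
      unfolding aa_def by (rule sum_mono2) (use sub n trans_nonneg in auto)
    also have "\<dots> = (\<Sum>j\<in>{1..n}. trans F n 1 n j) - trans F n 1 n n"
      using n by (simp add: sum_diff1)
    also have "(\<Sum>j\<in>{1..n}. trans F n 1 n j) = 1" by (rule trans_rowsum) (use n in auto)
    finally have a1: "aa F 1 M n \<le> 1 - trans F n 1 n n" .
    have tn: "trans F n 1 n n = exp (genQ F n n)" using trans_diag[of F n 1] by simp
    have "(\<Sum>j\<in>{1..<n}. rate F n j) \<le> \<Lambda>" unfolding \<Lambda>_def by (rule rate_total_le[OF F0 sF])
    then have "- \<Lambda> \<le> genQ F n n" by (simp add: genQ_def)
    then have "exp (- \<Lambda>) \<le> trans F n 1 n n" unfolding tn by simp
    then show "aa F 1 M n \<le> 1 - exp (- \<Lambda>)" using a1 by linarith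
  qed simp
  have "(\<lambda>M. lim (\<lambda>n. aa F 1 M n)) \<longlonglongrightarrow> 1"
    using cd unfolding comes_down_from_infinity_def aa_def by simp
  then have "1 \<le> 1 - exp (- \<Lambda>)"
    by (rule LIMSEQ_le_const2) (use bound in auto)
  then show False by simp
qed

lemma down_general:
  assumes H: "\<And>t \<epsilon>. 0 < t \<Longrightarrow> 0 < \<epsilon> \<Longrightarrow> \<exists>M0. \<forall>M\<ge>M0. 1 - \<epsilon> \<le> lim (\<lambda>n. aa F t M n)"
  shows "comes_down_from_infinity F"
  unfolding comes_down_from_infinity_def
proof (intro allI impI)
  fix t :: real assume t: "0 < t"
  have "(\<lambda>M. lim (\<lambda>n. aa F t M n)) \<longlonglongrightarrow> 1"
  proof (rule LIMSEQ_I)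
    fix r :: real assume r: "0 < r"
    obtain M0 where M0: "\<forall>M\<ge>M0. 1 - r / 2 \<le> lim (\<lambda>n. aa F t M n)"
      using H[OF t, of "r / 2"] r by auto
    have "norm (lim (\<lambda>n. aa F t M n) - 1) < r" if "M \<ge> M0" for M
      using M0 that lim_upper[of t M] t r by auto
    then show "\<exists>no. \<forall>n\<ge>no. norm (lim (\<lambda>na. aa F t n na) - 1) < r" by blast
  qed
  then show "(\<lambda>M. lim (\<lambda>n. \<Sum>j\<in>{1..M}. trans F n t n j)) \<longlonglongrightarrow> 1"
    unfolding aa_def by simp
qed

lemma tail_inf:
  assumes t: "0 \<le> t" and Mn: "M < n"
  shows "(\<Sum>j\<in>{M<..n}. trans F n t n j) \<le> exp (- ((\<Sum>k<M. F (Suc k)) * t))"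
proof -
  define \<Lambda> where "\<Lambda> = (\<Sum>k<M. F (Suc k))"
  define c where "c = cc F n \<Lambda>"
  have \<Lambda>0: "0 \<le> \<Lambda>" unfolding \<Lambda>_def by (intro sum_nonneg Fnn)
  interpret umat "Bm F c" n c unfolding c_def by (rule Bm_umat[OF \<Lambda>0])
  have "0 \<le> (\<Sum>l\<in>{1..n}. \<Sum>j\<in>{1..<l}. rate F l j)"
    by (intro sum_nonneg rate_nonneg) auto
  then have \<Lambda>c: "\<Lambda> \<le> c" unfolding c_def cc_def by simp
  have LB: "\<Lambda> \<le> (\<Sum>j\<in>{1..M}. Bm F c l j)" if l: "l \<in> {M<..n}" for l
  proof -
    have "(\<Sum>j\<in>{1..M}. Bm F c l j) = (\<Sum>j\<in>{1..M}. rate F l j)"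
      by (intro sum.cong refl) (use l in \<open>auto simp: Bm_def genQ_def\<close>)
    then show ?thesis unfolding \<Lambda>_def using rate_low_ge[of M l] l by simp
  qed
  have te: "(\<Sum>j\<in>{M<..n}. P m n j) \<le> (c - \<Lambda>) ^ m" for m
    by (rule tail_exp) (use Mn \<Lambda>0 \<Lambda>c LB in auto)
  have "(\<Sum>j\<in>{M<..n}. trans F n t n j) = exp (- (c * t)) * (\<Sum>m. t ^ m / fact m * (\<Sum>j\<in>{M<..n}. P m n j))"
    unfolding c_def by (rule trans_sum) auto
  also have "\<dots> \<le> exp (- (c * t)) * (\<Sum>m. ((c - \<Lambda>) * t) ^ m / fact m)"
  proof (rule mult_left_mono, rule suminf_le)
    fix m
    have "t ^ m / fact m * (\<Sum>j\<in>{M<..n}. P m n j) \<le> t ^ m / fact m * (c - \<Lambda>) ^ m"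
      by (rule mult_left_mono[OF te]) (use t in auto)
    then show "t ^ m / fact m * (\<Sum>j\<in>{M<..n}. P m n j) \<le> ((c - \<Lambda>) * t) ^ m / fact m"
      by (simp add: power_mult_distrib mult_ac)
  next
    show "summable (\<lambda>m. t ^ m / fact m * (\<Sum>j\<in>{M<..n}. P m n j))"
      unfolding c_def by (rule U_sum_summable) auto
  next
    show "summable (\<lambda>m. ((c - \<Lambda>) * t) ^ m / fact m)"
      using exp_sums_real by (rule sums_summable)
  qed simp
  also have "(\<Sum>m. ((c - \<Lambda>) * t) ^ m / fact m) = exp ((c - \<Lambda>) * t)"
    using exp_sums_real by (rule sums_unique[symmetric])
  also have "exp (- (c * t)) * exp ((c - \<Lambda>) * t) = exp (- (\<Lambda> * t))"
    by (simp add: exp_add[symmetric] algebra_simps)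
  finally show ?thesis unfolding \<Lambda>_def .
qed

lemma down_inf:
  assumes ns: "\<not> summable (\<lambda>k. F (Suc k))"
  shows "comes_down_from_infinity F"
proof (rule down_general)
  fix t \<epsilon> :: real assume t: "0 < t" and e: "0 < \<epsilon>"
  define L where "L = max 0 (- ln \<epsilon> / t)"
  have "\<exists>K. L \<le> (\<Sum>k<K. F (Suc k))"
  proof (rule ccontr)
    assume "\<not> ?thesis"
    then have "\<And>K. (\<Sum>k<K. F (Suc k)) \<le> L" by (meson linear)
    then have "summable (\<lambda>k. F (Suc k))" by (intro summableI_nonneg_bounded Fnn)
    then show False using ns by simp
  qed
  then obtain K where K: "L \<le> (\<Sum>k<K. F (Suc k))" by blast
  show "\<exists>M0. \<forall>M\<ge>M0. 1 - \<epsilon> \<le> lim (\<lambda>n. aa F t M n)"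
  proof (intro exI allI impI)
    fix M assume M: "K \<le> M"
    have mono: "(\<Sum>k<K. F (Suc k)) \<le> (\<Sum>k<M. F (Suc k))"
      by (rule sum_mono2) (use M Fnn in auto)
    have "exp (- ((\<Sum>k<M. F (Suc k)) * t)) \<le> exp (- (L * t))"
      using K mono t by (simp add: mult_right_mono)
    also have "- (L * t) \<le> ln \<epsilon>"
    proof -
      have "- ln \<epsilon> / t \<le> L" unfolding L_def by simp
      then have "(- ln \<epsilon> / t) * t \<le> L * t" using t by (intro mult_right_mono) auto
      then show ?thesis using t by simp
    qed
    then have "exp (- (L * t)) \<le> \<epsilon>" using e by (metis exp_le_cancel_iff exp_ln)
    finally have d: "exp (- ((\<Sum>k<M. F (Suc k)) * t)) \<le> \<epsilon>" .
    have "1 - exp (- ((\<Sum>k<M. F (Suc k)) * t)) \<le> lim (\<lambda>n. aa F t M n)"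
      by (rule lim_lower) (use t tail_inf in auto)
    then show "1 - \<epsilon> \<le> lim (\<lambda>n. aa F t M n)" using d by linarith
  qed
qed

end



context Fctx begin

lemma tail_kingman:
  assumes F0: "0 < F 0" and t: "0 < t" and M: "1 \<le> M" and Mn: "M < n"
  shows "(\<Sum>j\<in>{M<..n}. trans F n t n j) \<le> 2 / (F 0 * real M * t)"
proof -
  define c where "c = cc F n 1"
  interpret umat "Bm F c" n c unfolding c_def by (rule Bm_umat) simp
  have "0 \<le> (\<Sum>l\<in>{1..n}. \<Sum>j\<in>{1..<l}. rate F l j)"
    by (intro sum_nonneg rate_nonneg) auto
  then have c1: "1 \<le> c" unfolding c_def cc_def by simp
  define V where "V j = (if j \<le> M then 0 else 2 / F 0 * (1 / real M - 1 / real j))" for j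
  have Mpos: "0 < real M" using M by simp
  have V0: "0 \<le> V j" for j
  proof (cases "j \<le> M")
    case False
    then have "1 / real j \<le> 1 / real M" using M by (intro divide_left_mono) auto
    then show ?thesis using False F0 by (simp add: V_def)
  qed (simp add: V_def)
  have Vge: "V j = 2 / F 0 * (1 / real M - 1 / real j)" if "M \<le> j" for j
    using that by (cases "j = M") (auto simp: V_def)
  have Vmono: "V j \<le> V l" if "j \<le> l" for j l
  proof (cases "l \<le> M")
    case True
    then show ?thesis using that by (simp add: V_def)
  next
    case False
    show ?thesis
    proof (cases "j \<le> M")
      case True
      then show ?thesis using V0[of l] by (simp add: V_def)
    next
      case False
      then have "1 / real l \<le> 1 / real j" using that by (intro divide_left_mono) auto
      then have "2 / F 0 * (1 / real M - 1 / real j) \<le> 2 / F 0 * (1 / real M - 1 / real l)"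
        using F0 by (intro mult_left_mono) auto
      then show ?thesis using Vge[of j] Vge[of l] False \<open>\<not> l \<le> M\<close> by simp
    qed
  qed
  have Vn: "V n \<le> 2 / (F 0 * real M)"
  proof -
    have "V n = 2 / F 0 * (1 / real M - 1 / real n)" using Mn by (simp add: V_def)
    also have "\<dots> \<le> 2 / F 0 * (1 / real M)" using F0 by (intro mult_left_mono) auto
    also have "\<dots> = 2 / (F 0 * real M)" by simp
    finally show ?thesis .
  qed
  have LV: "(\<Sum>j\<in>{1..n}. Bm F c l j * V j) \<le> c * V l - (if M < l then 1 else 0)"
    if l: "l \<in> {1..n}" for l
  proof -
    have "(\<Sum>j\<in>{1..n}. Bm F c l j * V j) = (\<Sum>j\<in>{1..n}. genQ F l j * V j) + (\<Sum>j\<in>{1..n}. if l = j then c * V j else 0)"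
    proof -
      have "(\<Sum>j\<in>{1..n}. Bm F c l j * V j) = (\<Sum>j\<in>{1..n}. genQ F l j * V j + (if l = j then c * V j else 0))"
        by (intro sum.cong refl) (simp add: Bm_def distrib_right)
      then show ?thesis by (simp only: sum.distrib)
    qed
    also have "(\<Sum>j\<in>{1..n}. if l = j then c * V j else 0) = c * V l"
      using l by (simp add: sum.delta)
    also have "(\<Sum>j\<in>{1..n}. genQ F l j * V j) = (\<Sum>j\<in>{1..<l}. rate F l j * (V j - V l))"
      by (rule genQ_row) (use l in auto)
    finally have eq: "(\<Sum>j\<in>{1..n}. Bm F c l j * V j) = (\<Sum>j\<in>{1..<l}. rate F l j * (V j - V l)) + c * V l" .
    have "(\<Sum>j\<in>{1..<l}. rate F l j * (V j - V l)) \<le> - (if M < l then 1 else 0)"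
    proof (cases "M < l")
      case False
      have "(\<Sum>j\<in>{1..<l}. rate F l j * (V j - V l)) = 0"
        by (rule sum.neutral) (use False in \<open>auto simp: V_def\<close>)
      then show ?thesis using False by simp
    next
      case True
      define q where "q = l - 1"
      have ql: "Suc q = l" using True M by (simp add: q_def)
      have q: "q \<in> {1..<l}" using True M by (auto simp: q_def)
      have Mq: "M \<le> q" using True by (simp add: q_def)
      have rest: "(\<Sum>j\<in>{1..<l} - {q}. rate F l j * (V j - V l)) \<le> 0"
        by (intro sum_nonpos mult_nonneg_nonpos rate_nonneg) (auto intro: Vmono)
      have rq: "F 0 * real (l choose 2) \<le> rate F l q"
      proof -
        have "0 \<le> (\<Sum>k. F (Suc k) * occ l (Suc k) q)"
          by (intro suminf_nonneg rate_term_summable mult_nonneg_nonneg Fnn occ_nonneg) (use q in auto)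
        then show ?thesis unfolding rate_def using ql by simp
      qed
      have dV: "V q - V l = 2 / F 0 * (1 / real l - 1 / real q)"
        using Vge[OF Mq] Vge[of l] True by (simp add: algebra_simps)
      have rl: "real q = real l - 1" using ql by auto
      have qpos: "0 < real q" using q by simp
      have lpos: "0 < real l" using q by simp
      have dVneg: "V q - V l \<le> 0" using Vmono[of q l] ql by simp
      have "rate F l q * (V q - V l) \<le> F 0 * real (l choose 2) * (V q - V l)"
        by (rule mult_right_mono_neg[OF rq dVneg])
      also have "F 0 * real (l choose 2) * (V q - V l) = -1"
      proof -
        have "F 0 * real (l choose 2) * (V q - V l) = (real (l choose 2) * 2) * (1 / real l - 1 / real q)"
          using F0 by (simp add: dV)
        also have "\<dots> = real l * real q * (1 / real l - 1 / real q)"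
          by (simp add: choose2_real rl)
        also have "\<dots> = real q - real l" using qpos lpos by (simp add: field_simps)
        also have "\<dots> = -1" using rl by simp
        finally show ?thesis .
      qed
      finally have tq: "rate F l q * (V q - V l) \<le> -1" .
      have "(\<Sum>j\<in>{1..<l}. rate F l j * (V j - V l)) = rate F l q * (V q - V l) + (\<Sum>j\<in>{1..<l} - {q}. rate F l j * (V j - V l))"
        by (simp only: sum.remove[OF finite_atLeastLessThan q])
      then show ?thesis using tq rest True by simp
    qed
    then show ?thesis using eq by simp
  qed
  have tl: "(\<Sum>j\<in>{M<..n}. P m n j) \<le> c ^ Suc m * V n / real (Suc m)" for m
    by (rule tail_lyap[OF V0 _ _ LV]) (use c1 Mn in auto)
  define e where "e m = (c * t) ^ m / fact m" for m
  have es: "e sums exp (c * t)" unfolding e_def by (rule exp_sums_real)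
  have es1: "(\<lambda>m. e (Suc m)) sums (exp (c * t) - 1)"
    using es by (subst sums_Suc_iff) (simp add: e_def)
  have es2: "(\<lambda>m. V n / t * e (Suc m)) sums (V n / t * (exp (c * t) - 1))"
    by (rule sums_mult[OF es1])
  have "(\<Sum>j\<in>{M<..n}. trans F n t n j) = exp (- (c * t)) * (\<Sum>m. t ^ m / fact m * (\<Sum>j\<in>{M<..n}. P m n j))"
    unfolding c_def by (rule trans_sum) auto
  also have "\<dots> \<le> exp (- (c * t)) * (\<Sum>m. V n / t * e (Suc m))"
  proof (rule mult_left_mono, rule suminf_le)
    fix m
    have "t ^ m / fact m * (\<Sum>j\<in>{M<..n}. P m n j) \<le> t ^ m / fact m * (c ^ Suc m * V n / real (Suc m))"
      by (rule mult_left_mono[OF tl]) (use t in auto)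
    also have "\<dots> = V n / t * e (Suc m)"
      using t by (simp add: e_def field_simps power_mult_distrib)
    finally show "t ^ m / fact m * (\<Sum>j\<in>{M<..n}. P m n j) \<le> V n / t * e (Suc m)" .
  next
    show "summable (\<lambda>m. t ^ m / fact m * (\<Sum>j\<in>{M<..n}. P m n j))"
      unfolding c_def by (rule U_sum_summable) auto
  next
    show "summable (\<lambda>m. V n / t * e (Suc m))" using es2 by (rule sums_summable)
  qed simp
  also have "(\<Sum>m. V n / t * e (Suc m)) = V n / t * (exp (c * t) - 1)"
    using es2 by (rule sums_unique[symmetric])
  also have "exp (- (c * t)) * (V n / t * (exp (c * t) - 1)) = V n / t * (1 - exp (- (c * t)))"
  proof -
    have "exp (- (c * t)) * exp (c * t) = 1" using exp_add[of "- (c * t)" "c * t"] by simp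
    then show ?thesis by (simp add: algebra_simps)
  qed
  also have "\<dots> \<le> V n / t"
  proof -
    have "0 \<le> V n / t" using V0[of n] t by simp
    moreover have "0 < exp (- (c * t))" by simp
    ultimately show ?thesis by (intro mult_left_le) auto
  qed
  also have "\<dots> \<le> 2 / (F 0 * real M) / t"
    by (rule divide_right_mono[OF Vn]) (use t in simp)
  also have "\<dots> = 2 / (F 0 * real M * t)" by simp
  finally show ?thesis .
qed

lemma down_kingman:
  assumes F0: "0 < F 0"
  shows "comes_down_from_infinity F"
proof (rule down_general)
  fix t \<epsilon> :: real assume t: "0 < t" and e: "0 < \<epsilon>"
  obtain M0 :: nat where M0: "2 / (F 0 * t * \<epsilon>) < real M0" using reals_Archimedean2 by blast
  show "\<exists>M0. \<forall>M\<ge>M0. 1 - \<epsilon> \<le> lim (\<lambda>n. aa F t M n)"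
  proof (intro exI[of _ "Suc M0"] allI impI)
    fix M assume M: "Suc M0 \<le> M"
    have Mp: "0 < real M" using M by simp
    have d: "2 / (F 0 * real M * t) \<le> \<epsilon>"
    proof -
      have "2 / (F 0 * t * \<epsilon>) < real M" using M0 M by simp
      then have "2 < real M * (F 0 * t * \<epsilon>)" using F0 t e by (simp add: divide_less_eq)
      then have "2 \<le> \<epsilon> * (F 0 * real M * t)" by (simp add: mult_ac)
      then show ?thesis using F0 t Mp by (simp add: divide_le_eq)
    qed
    have "1 - 2 / (F 0 * real M * t) \<le> lim (\<lambda>n. aa F t M n)"
    proof (rule lim_lower)
      show "0 \<le> 2 / (F 0 * real M * t)" using F0 t Mp by simp
      show "\<And>n. M < n \<Longrightarrow> (\<Sum>j\<in>{M<..n}. trans F n t n j) \<le> 2 / (F 0 * real M * t)"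
        by (rule tail_kingman) (use F0 t M in auto)
    qed (use t in simp)
    then show "1 - \<epsilon> \<le> lim (\<lambda>n. aa F t M n)" using d by linarith
  qed
qed

end

theorem mainTheorem4:
  fixes F :: "nat \<Rightarrow> real"
  assumes "\<And>k. F k \<ge> 0"
    and "summable (\<lambda>k. F (Suc k) / real (Suc k))"
  shows "comes_down_from_infinity F \<longleftrightarrow>
           (S_atom F 0 > 0 \<or> \<not> summable (\<lambda>k. real (Suc k) * S_atom F (Suc k)))"
proof -
  interpret Fctx F by unfold_locales (use assms in auto)
  have S0: "S_atom F 0 = F 0" by (simp add: S_atom_def)
  have S1: "(\<lambda>k. real (Suc k) * S_atom F (Suc k)) = (\<lambda>k. F (Suc k))"
    by (intro ext) (simp add: S_atom_def)
  show ?thesis unfolding S0 S1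
  proof
    assume cd: "comes_down_from_infinity F"
    show "0 < F 0 \<or> \<not> summable (\<lambda>k. F (Suc k))"
    proof (rule ccontr)
      assume "\<not> (0 < F 0 \<or> \<not> summable (\<lambda>k. F (Suc k)))"
      then have "F 0 = 0" "summable (\<lambda>k. F (Suc k))" using Fnn[of 0] by auto
      then show False using notdown cd by blast
    qed
  next
    assume "0 < F 0 \<or> \<not> summable (\<lambda>k. F (Suc k))"
    then show "comes_down_from_infinity F" using down_kingman down_inf by blast
  qed
qed


end
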